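(* Let $\mathbf{\Sigma}$ be a $p\times p$ symmetric positive definite matrix ($p$ fixed), $\mathbf{\Omega}=\mathbf{\Sigma}^{-1}$, $\mathbf{Y}_1,\mathbf{Y}_2,\ldots$ i.i.d. $\mathcal{N}_p(\mathbf{0},\mathbf{\Sigma})$, $\mathbf{S}_n=\frac1n\sum_{i=1}^n\mathbf{Y}_i\mathbf{Y}_i^{\mathrm{T}}$, $\lambda_{a,n}$ nonnegative random variables converging almost surely to $0$, and $\mathbf{T}$ a nonrandom symmetric positive definite matrix. With $$\hat{\mathbf{\Sigma}}_n^{\mathrm{I}a}(\lambda_{a,n}) = \Big[\lambda_{a,n}\mathbf{I}_p+\tfrac14(\mathbf{S}_n-\lambda_{a,n}\mathbf{T})^2\Big]^{1/2}+\tfrac12(\mathbf{S}_n-\lambda_{a,n}\mathbf{T}),$$ one has $\lim_{n\to\infty}\mathbb{E}\big(\|\hat{\mathbf{\Sigma}}_n^{\mathrm{I}a}(\lambda_{a,n})-\mathbf{\Sigma}\|_F^2\big)=0$. Moreover $\hat{\mathbf{\Omega}}_n^{\mathrm{I}a}(\lambda_{a,n})=[\hat{\mathbf{\Sigma}}_n^{\mathrm{I}a}(\lambda_{a,n})]^{-1}$ is a consistent estimator of $\mathbf{\Omega}$ (converges to $\mathbf{\Omega}$ in probability).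
   Context: $\|\cdot\|_F$ is the Frobenius norm. For a real symmetric positive semidefinite matrix $\mathbf{H}$, $\mathbf{H}^{1/2}$ denotes its unique symmetric positive semidefinite square root. *)

theory Defs
  imports "HOL-Analysis.Analysis" "HOL-Probability.Probability"
begin

definition frob_norm :: "real ^ 'n ^ 'm \<Rightarrow> real" where
  "frob_norm A = sqrt (\<Sum>i\<in>UNIV. \<Sum>j\<in>UNIV. (A $ i $ j)\<^sup>2)"

definition symmetric_mat :: "real ^ 'n ^ 'n \<Rightarrow> bool" where
  "symmetric_mat A \<longleftrightarrow> transpose A = A"

definition pos_semidef :: "real ^ 'n ^ 'n \<Rightarrow> bool" where
  "pos_semidef A \<longleftrightarrow> symmetric_mat A \<and> (\<forall>x. 0 \<le> x \<bullet> (A *v x))"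

definition pos_def :: "real ^ 'n ^ 'n \<Rightarrow> bool" where
  "pos_def A \<longleftrightarrow> symmetric_mat A \<and> (\<forall>x. x \<noteq> 0 \<longrightarrow> 0 < x \<bullet> (A *v x))"

definition psd_sqrt :: "real ^ 'n ^ 'n \<Rightarrow> real ^ 'n ^ 'n" where
  "psd_sqrt H = (THE R. pos_semidef R \<and> R ** R = H)"

definition outer :: "real ^ 'n \<Rightarrow> real ^ 'n ^ 'n" where
  "outer y = (\<chi> j k. y $ j * y $ k)"

definition mvn_density :: "real ^ 'n ^ 'n \<Rightarrow> real ^ 'n \<Rightarrow> real" where
  "mvn_density Sig x =
     exp (- (x \<bullet> (matrix_inv Sig *v x)) / 2) / sqrt ((2 * pi) ^ CARD('n) * det Sig)"

text \<open>Sample covariance S_n = (1/n) sum_{i=1}^n Y_i Y_i^T (with Y_1,...,Y_n stored as Y 0, ..., Y (n-1)).\<close>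
definition sample_cov :: "(nat \<Rightarrow> 'a \<Rightarrow> real ^ 'n) \<Rightarrow> nat \<Rightarrow> 'a \<Rightarrow> real ^ 'n ^ 'n" where
  "sample_cov Y n \<omega> = (1 / real n) *\<^sub>R (\<Sum>i<n. outer (Y i \<omega>))"

definition sigma_hat_Ia :: "real ^ 'n ^ 'n \<Rightarrow> real ^ 'n ^ 'n \<Rightarrow> real \<Rightarrow> real ^ 'n ^ 'n" where
  "sigma_hat_Ia S T lam =
     (let D = S - lam *\<^sub>R T in
      psd_sqrt (lam *\<^sub>R mat 1 + (1/4) *\<^sub>R (D ** D)) + (1/2) *\<^sub>R D)"

definition conv_in_prob :: "'a measure \<Rightarrow> (nat \<Rightarrow> 'a \<Rightarrow> real ^ 'n ^ 'm) \<Rightarrow> real ^ 'n ^ 'm \<Rightarrow> bool" where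
  "conv_in_prob M X L \<longleftrightarrow>
     (\<forall>n. X n \<in> borel_measurable M) \<and>
     (\<forall>e>0. (\<lambda>n. measure M {\<omega> \<in> space M. frob_norm (X n \<omega> - L) > e}) \<longlonglongrightarrow> 0)"

end

theory Submission
  imports Defs
begin


lemma inner_sq_le: "(x \<bullet> y)\<^sup>2 \<le> (norm x)\<^sup>2 * (norm (y::'a::real_inner))\<^sup>2"
  using Cauchy_Schwarz_ineq2[of x y]
  by (metis abs_ge_zero power2_abs power_mono power_mult_distrib)

lemma norm_sq_mat: "(norm (A::real^'n^'m))\<^sup>2 = (\<Sum>i\<in>UNIV. \<Sum>j\<in>UNIV. (A $ i $ j)\<^sup>2)"
  by (simp add: norm_vec_def L2_set_def sum_nonneg)

lemma frob_norm_eq: "frob_norm A = norm A"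
  unfolding frob_norm_def by (metis norm_ge_zero norm_sq_mat real_sqrt_unique)

lemma norm_sq_vec: "(norm (x::real^'n))\<^sup>2 = (\<Sum>i\<in>UNIV. (x $ i)\<^sup>2)"
  by (simp add: norm_vec_def L2_set_def sum_nonneg)

lemma norm_matrix_mul_le:
  fixes A :: "real^'m^'n" and B :: "real^'k^'m"
  shows "norm (A ** B) \<le> norm A * norm B"
proof -
  define c where "c j = (\<chi> k. B $ k $ j)" for j
  have e: "(A ** B) $ i $ j = A $ i \<bullet> c j" for i j
    by (simp add: matrix_matrix_mult_def inner_vec_def c_def)
  have "(norm (A ** B))\<^sup>2 = (\<Sum>i\<in>UNIV. \<Sum>j\<in>UNIV. (A $ i \<bullet> c j)\<^sup>2)"
    by (simp add: norm_sq_mat e)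
  also have "\<dots> \<le> (\<Sum>i\<in>UNIV. \<Sum>j\<in>UNIV. (norm (A $ i))\<^sup>2 * (norm (c j))\<^sup>2)"
    by (intro sum_mono inner_sq_le)
  also have "\<dots> = (\<Sum>i\<in>UNIV. (norm (A $ i))\<^sup>2) * (\<Sum>j\<in>UNIV. (norm (c j))\<^sup>2)"
    by (simp add: sum_product)
  also have "(\<Sum>i\<in>UNIV. (norm (A $ i))\<^sup>2) = (norm A)\<^sup>2"
    by (simp add: norm_sq_mat norm_sq_vec)
  also have "(\<Sum>j\<in>UNIV. (norm (c j))\<^sup>2) = (norm B)\<^sup>2"
    unfolding norm_sq_mat norm_sq_vec c_def vec_lambda_beta by (rule sum.swap)
  finally have "(norm (A ** B))\<^sup>2 \<le> (norm A * norm B)\<^sup>2" by (simp add: power_mult_distrib)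
  then show ?thesis by (simp add: power2_le_iff_abs_le)
qed

lemma norm_matrix_vec_le:
  fixes A :: "real^'m^'n"
  shows "norm (A *v x) \<le> norm A * norm x"
proof -
  have e: "(A *v x) $ i = A $ i \<bullet> x" for i
    by (simp add: matrix_vector_mult_def inner_vec_def mult.commute)
  have "(norm (A *v x))\<^sup>2 = (\<Sum>i\<in>UNIV. (A $ i \<bullet> x)\<^sup>2)"
    by (simp add: norm_sq_vec e)
  also have "\<dots> \<le> (\<Sum>i\<in>UNIV. (norm (A $ i))\<^sup>2 * (norm x)\<^sup>2)"
    by (intro sum_mono inner_sq_le)
  also have "\<dots> = (norm A * norm x)\<^sup>2"
    by (simp add: sum_distrib_right[symmetric] norm_sq_mat norm_sq_vec power_mult_distrib)
  finally show ?thesis by (simp add: power2_le_iff_abs_le)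
qed

lemma matrix_add_rdistrib': "((A::real^'m^'n) + B) ** C = A ** C + B ** C"
  by (simp add: matrix_matrix_mult_def vec_eq_iff sum.distrib distrib_right)

lemma bounded_bilinear_matrix_mul:
  "bounded_bilinear ((**) :: real^'m^'n \<Rightarrow> real^'k^'m \<Rightarrow> real^'k^'n)"
proof (rule bounded_bilinear.intro)
  show "\<exists>K. \<forall>a b. norm ((a::real^'m^'n) ** (b::real^'k^'m)) \<le> norm a * norm b * K"
    by (rule exI[of _ 1]) (simp add: norm_matrix_mul_le)
qed (auto simp: matrix_add_ldistrib matrix_add_rdistrib' matrix_scalar_ac scalar_matrix_assoc)

lemma bounded_bilinear_matrix_vec:
  "bounded_bilinear ((*v) :: real^'m^'n \<Rightarrow> real^'m \<Rightarrow> real^'n)"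
proof (rule bounded_bilinear.intro)
  show "\<exists>K. \<forall>a b. norm ((a::real^'m^'n) *v (b::real^'m)) \<le> norm a * norm b * K"
    by (rule exI[of _ 1]) (simp add: norm_matrix_vec_le)
qed (auto simp: matrix_vector_right_distrib matrix_vector_mult_add_rdistrib
     matrix_vector_mult_scaleR scaleR_matrix_vector_assoc)


lemmas mm_bb = bounded_bilinear_matrix_mul
lemmas mv_bb = bounded_bilinear_matrix_vec

lemma symmetric_mat_iff: "symmetric_mat A \<longleftrightarrow> (\<forall>i j. A $ i $ j = A $ j $ i)"
  unfolding symmetric_mat_def transpose_def vec_eq_iff by auto

lemma sym_inner:
  assumes "symmetric_mat (A::real^'n^'n)"
  shows "x \<bullet> (A *v y) = (A *v x) \<bullet> y"
proof -
  have 1: "x \<bullet> (A *v y) = (\<Sum>i\<in>UNIV. \<Sum>j\<in>UNIV. x$i * A$i$j * y$j)"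
    by (simp add: inner_vec_def matrix_vector_mult_def sum_distrib_left mult.assoc)
  have 2: "(A *v x) \<bullet> y = (\<Sum>i\<in>UNIV. \<Sum>j\<in>UNIV. A$i$j * x$j * y$i)"
    by (simp add: inner_vec_def matrix_vector_mult_def sum_distrib_right)
  also have "\<dots> = (\<Sum>j\<in>UNIV. \<Sum>i\<in>UNIV. A$i$j * x$j * y$i)" by (rule sum.swap)
  also have "\<dots> = (\<Sum>j\<in>UNIV. \<Sum>i\<in>UNIV. x$j * A$j$i * y$i)"
    using assms unfolding symmetric_mat_iff by (simp add: mult_ac)
  finally show ?thesis using 1 by simp
qed

lemma quad_discr:
  fixes a b c :: real
  assumes "\<And>t. 0 \<le> a + 2 * t * b + t\<^sup>2 * c" and "0 \<le> c"
  shows "b\<^sup>2 \<le> a * c"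
proof (cases "c = 0")
  case True
  have "b = 0"
  proof (rule ccontr)
    assume "b \<noteq> 0"
    have "0 \<le> a + 2 * (-(a+1)/(2*b)) * b" using assms(1)[of "-(a+1)/(2*b)"] True by simp
    with \<open>b \<noteq> 0\<close> show False by (simp add: field_simps)
  qed
  then show ?thesis using True by simp
next
  case False
  then have c: "c > 0" using assms(2) by simp
  have "0 \<le> a + 2 * (-b/c) * b + (-b/c)\<^sup>2 * c" by (rule assms(1))
  also have "\<dots> = a - b\<^sup>2 / c" using c by (simp add: field_simps power2_eq_square)
  finally show ?thesis using c by (simp add: field_simps)
qed

lemma psd_cs:
  assumes "pos_semidef (A::real^'n^'n)"
  shows "(x \<bullet> (A *v y))\<^sup>2 \<le> (x \<bullet> (A *v x)) * (y \<bullet> (A *v y))"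
proof -
  have sym: "symmetric_mat A" and nn: "\<And>z. 0 \<le> z \<bullet> (A *v z)" using assms pos_semidef_def by auto
  have "0 \<le> (x \<bullet> (A *v x)) + 2 * t * (x \<bullet> (A *v y)) + t\<^sup>2 * (y \<bullet> (A *v y))" for t
  proof -
    have "(x + t *\<^sub>R y) \<bullet> (A *v (x + t *\<^sub>R y)) = (x \<bullet> (A *v x)) + t * (x \<bullet> (A *v y)) + t * (y \<bullet> (A *v x)) + t\<^sup>2 * (y \<bullet> (A *v y))"
      by (simp add: matrix_vector_right_distrib matrix_vector_mult_scaleR inner_add_left inner_add_right power2_eq_square ring_distribs)
    moreover have "y \<bullet> (A *v x) = x \<bullet> (A *v y)" using sym_inner[OF sym, of y x] by (simp add: inner_commute)
    ultimately show ?thesis using nn[of "x + t *\<^sub>R y"] by simp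
  qed
  then show ?thesis by (rule quad_discr) (rule nn)
qed

lemma psd_zero:
  assumes "pos_semidef (A::real^'n^'n)" and "x \<bullet> (A *v x) = 0"
  shows "A *v x = 0"
proof -
  have sym: "symmetric_mat A" using assms pos_semidef_def by auto
  have "(x \<bullet> (A *v (A *v x)))\<^sup>2 \<le> 0"
    using psd_cs[OF assms(1), of x "A *v x"] assms(2) by simp
  moreover have "x \<bullet> (A *v (A *v x)) = (A *v x) \<bullet> (A *v x)" using sym_inner[OF sym] by simp
  ultimately show ?thesis by simp
qed

lemma psd_contract:
  assumes "pos_semidef (A::real^'n^'n)" and "\<And>x. x \<bullet> (A *v x) \<le> K * (norm x)\<^sup>2"
  shows "norm (A *v x) \<le> K * norm x"
proof -
  have sym: "symmetric_mat A" and nn: "\<And>z. 0 \<le> z \<bullet> (A *v z)" using assms pos_semidef_def by auto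
  have K: "0 \<le> K" if "x \<noteq> 0" for x :: "real^'n"
  proof -
    have "0 < (norm x)\<^sup>2" using that by simp
    moreover have "0 \<le> K * (norm x)\<^sup>2" using nn[of x] assms(2)[of x] by linarith
    ultimately show ?thesis by (simp add: zero_le_mult_iff)
  qed
  have e: "x \<bullet> (A *v (A *v x)) = (norm (A *v x))\<^sup>2" using sym_inner[OF sym] by (simp add: power2_norm_eq_inner)
  have "((norm (A *v x))\<^sup>2)\<^sup>2 \<le> (x \<bullet> (A *v x)) * ((A *v x) \<bullet> (A *v (A *v x)))"
    using psd_cs[OF assms(1), of x "A *v x"] e by simp
  also have "\<dots> \<le> (K * (norm x)\<^sup>2) * (K * (norm (A *v x))\<^sup>2)"
    by (intro mult_mono assms(2) nn) (use assms(2) nn order_trans in blast)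
  finally have fin: "((norm (A *v x))\<^sup>2)\<^sup>2 \<le> (K * norm x)\<^sup>2 * (norm (A *v x))\<^sup>2"
    by (simp add: power_mult_distrib mult_ac power2_eq_square)
  then show ?thesis
  proof (cases "A *v x = 0")
    case True
    then show ?thesis using K[of x] by (cases "x = 0") auto
  next
    case False
    then have "(norm (A *v x))\<^sup>2 \<le> (K * norm x)\<^sup>2"
      using fin by (simp add: power2_eq_square)
    moreover have "x \<noteq> 0" using False by auto
    ultimately show ?thesis using K[of x] by (simp add: power2_le_iff_abs_le)
  qed
qed

lemma norm_sq_cols: "(norm (A::real^'n^'m))\<^sup>2 = (\<Sum>j\<in>UNIV. (norm (A *v axis j 1))\<^sup>2)"
proof -
  have "(A *v axis j 1) $ i = A $ i $ j" for i j
    by (simp add: matrix_vector_mult_def axis_def if_distrib cong: if_cong)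
  then show ?thesis by (simp add: norm_sq_mat norm_sq_vec) (rule sum.swap)
qed

lemma norm_le_of_contract:
  assumes "\<And>x. norm ((A::real^'n^'m) *v x) \<le> K * norm x"
  shows "norm A \<le> sqrt (CARD('n)) * K"
proof -
  have "(norm A)\<^sup>2 \<le> (\<Sum>j\<in>(UNIV::'n set). K\<^sup>2)"
    unfolding norm_sq_cols
  proof (intro sum_mono)
    fix j :: 'n
    have "norm (A *v axis j 1) \<le> K" using assms[of "axis j 1"] by (simp add: norm_axis_1)
    moreover have "0 \<le> norm (A *v axis j 1)" by simp
    ultimately show "(norm (A *v axis j 1))\<^sup>2 \<le> K\<^sup>2" by (simp add: power_mono)
  qed
  also have "\<dots> = (sqrt (CARD('n)) * K)\<^sup>2" by (simp add: power_mult_distrib)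
  finally have "(norm A)\<^sup>2 \<le> (sqrt (CARD('n)) * K)\<^sup>2" .
  moreover have "0 \<le> K" using assms[of "axis undefined 1"]
    by (metis norm_ge_zero order_trans mult_1_right norm_axis_1)
  ultimately show ?thesis using power2_le_imp_le[of "norm A" "sqrt (CARD('n)) * K"] by simp
qed

lemma psd_unique:
  assumes R: "pos_semidef (R::real^'n^'n)" and S: "pos_semidef S"
    and sq: "R ** R = S ** S" and comm: "R ** S = S ** R"
  shows "R = S"
proof -
  define E where "E = R - S"
  have symR: "symmetric_mat R" and symS: "symmetric_mat S" using R S pos_semidef_def by auto
  have symE: "symmetric_mat E" using symR symS unfolding E_def symmetric_mat_def
    by (simp add: transpose_def vec_eq_iff)
  have RSE: "(R + S) ** E = 0"
    unfolding E_def using sq comm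
    by (simp add: matrix_add_ldistrib matrix_add_rdistrib' mm_bb[THEN bounded_bilinear.diff_right]
         mm_bb[THEN bounded_bilinear.diff_left] mm_bb[THEN bounded_bilinear.add_left])
  have "E *v x = 0" for x
  proof -
    define y where "y = E *v x"
    have "y \<bullet> ((R + S) *v y) = 0"
      unfolding y_def matrix_vector_mul_assoc RSE by simp
    then have "y \<bullet> (R *v y) + y \<bullet> (S *v y) = 0"
      by (simp add: mv_bb[THEN bounded_bilinear.add_left] inner_add_right)
    moreover have "0 \<le> y \<bullet> (R *v y)" "0 \<le> y \<bullet> (S *v y)" using R S pos_semidef_def by auto
    ultimately have "y \<bullet> (R *v y) = 0" "y \<bullet> (S *v y) = 0" by linarith+
    then have "R *v y = 0" "S *v y = 0" using psd_zero R S by blast+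
    then have "E *v y = 0" unfolding E_def by (simp add: mv_bb[THEN bounded_bilinear.diff_left])
    then have "x \<bullet> (E *v y) = 0" by simp
    then have "y \<bullet> y = 0" using sym_inner[OF symE, of x y] y_def by simp
    then show ?thesis using y_def by simp
  qed
  then have "E = 0" by (simp add: matrix_eq)
  then show ?thesis unfolding E_def by simp
qed




function vco :: "nat \<Rightarrow> real" where
  "vco k = (if k = 0 then 1/2 else (1/2) * (\<Sum>i\<le>k-1. vco i * vco (k-1-i)))"
  by pat_completeness auto
termination by (relation "Wellfounded.measure (\<lambda>k. k)") auto

declare vco.simps[simp del]

lemma vco_0: "vco 0 = 1/2" by (simp add: vco.simps)
lemma vco_Suc: "vco (Suc k) = (1/2) * (\<Sum>i\<le>k. vco i * vco (k-i))"
  by (subst vco.simps) simp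

lemma vco_nonneg: "0 \<le> vco k"
proof (induction k rule: less_induct)
  case (less k)
  show ?case
  proof (cases k)
    case 0 then show ?thesis by (simp add: vco_0)
  next
    case (Suc m)
    have "0 \<le> (\<Sum>i\<le>m. vco i * vco (m-i))"
      using less Suc by (intro sum_nonneg mult_nonneg_nonneg) auto
    then show ?thesis unfolding Suc vco_Suc by simp
  qed
qed

lemma tri_sub_sq: "{(i,j). i + j < N} \<subseteq> {..<N} \<times> {..<(N::nat)}" by auto

lemma finite_tri: "finite {(i,j). i + j < (N::nat)}"
  by (rule finite_subset[OF tri_sub_sq]) auto

lemma vco_shift_sum: "(\<Sum>k<Suc N. vco k) = 1/2 + (1/2) * (\<Sum>(i,j)\<in>{(i,j). i + j < N}. vco i * vco j)"
proof -
  have "(\<Sum>k<Suc N. vco k) = vco 0 + (\<Sum>k<N. vco (Suc k))" by (rule sum.lessThan_Suc_shift)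
  also have "(\<Sum>k<N. vco (Suc k)) = (1/2) * (\<Sum>k<N. \<Sum>i\<le>k. vco i * vco (k-i))"
    by (simp add: vco_Suc sum_distrib_left)
  also have "(\<Sum>k<N. \<Sum>i\<le>k. vco i * vco (k-i)) = (\<Sum>(i,j)\<in>{(i,j). i + j < N}. vco i * vco j)"
    by (rule sum.triangle_reindex[symmetric])
  finally show ?thesis by (simp add: vco_0)
qed

lemma tri_le_sq: "(\<Sum>(i,j)\<in>{(i,j). i + j < N}. vco i * vco j) \<le> (\<Sum>k<N. vco k)\<^sup>2"
proof -
  have "(\<Sum>(i,j)\<in>{(i,j). i + j < N}. vco i * vco j) \<le> (\<Sum>(i,j)\<in>{..<N} \<times> {..<N}. vco i * vco j)"
    by (intro sum_mono2 tri_sub_sq) (auto intro: mult_nonneg_nonneg vco_nonneg)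
  also have "\<dots> = (\<Sum>k<N. vco k)\<^sup>2"
    by (simp add: sum.cartesian_product[symmetric] power2_eq_square sum_product)
  finally show ?thesis .
qed

lemma vco_partial: "(\<Sum>k<N. vco k) \<le> 1"
proof (induction N)
  case 0 then show ?case by simp
next
  case (Suc N)
  have "0 \<le> (\<Sum>k<N. vco k)" by (intro sum_nonneg vco_nonneg)
  then have "(\<Sum>k<N. vco k)\<^sup>2 \<le> 1" using Suc by (simp add: power_le_one)
  then show ?case using vco_shift_sum[of N] tri_le_sq[of N] by linarith
qed

lemma vco_summable: "summable vco"
  by (rule summableI_nonneg_bounded[OF vco_nonneg vco_partial])

lemma vco_suminf: "suminf vco = 1"
proof -
  define T where "T = suminf vco"
  have a: "summable (\<lambda>k. norm (vco k))" using vco_summable vco_nonneg by simp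
  have "(\<lambda>k. \<Sum>i\<le>k. vco i * vco (k - i)) sums (T * T)"
    unfolding T_def by (rule Cauchy_product_sums[OF a a])
  then have "(\<lambda>k. vco (Suc k)) sums (T * T / 2)"
    unfolding vco_Suc using sums_mult[of _ "T*T" "1/2"] by (simp add: mult.commute)
  then have "vco sums (T * T / 2 + vco 0)" by (simp add: sums_Suc_iff)
  then have "T = T * T / 2 + 1/2" unfolding T_def by (simp add: sums_iff vco_0)
  then have "(T - 1)\<^sup>2 = 0" by (simp add: power2_eq_square algebra_simps)
  then show ?thesis unfolding T_def by simp
qed

lemma tri_sum_lim: "(\<lambda>N. (\<Sum>k<N. vco k)\<^sup>2 - (\<Sum>(i,j)\<in>{(i,j). i + j < N}. vco i * vco j)) \<longlonglongrightarrow> 0"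
proof -
  have L: "(\<lambda>N. \<Sum>k<N. vco k) \<longlonglongrightarrow> 1" using summable_LIMSEQ[OF vco_summable] vco_suminf by simp
  have L2: "(\<lambda>N. \<Sum>k<Suc N. vco k) \<longlonglongrightarrow> 1" using LIMSEQ_Suc[OF L] .
  have e: "(\<Sum>(i,j)\<in>{(i,j). i + j < N}. vco i * vco j) = 2 * (\<Sum>k<Suc N. vco k) - 1" for N
    using vco_shift_sum[of N] by simp
  have "(\<lambda>N. (\<Sum>k<N. vco k)\<^sup>2 - (2 * (\<Sum>k<Suc N. vco k) - 1)) \<longlonglongrightarrow> 1\<^sup>2 - (2 * 1 - 1)"
    by (intro tendsto_intros L L2)
  then show ?thesis unfolding e by simp
qed

fun mpow :: "real^'n^'n \<Rightarrow> nat \<Rightarrow> real^'n^'n" where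
  "mpow B 0 = mat 1"
| "mpow B (Suc k) = B ** mpow B k"

lemma mpow_add: "mpow B (i + j) = mpow B i ** mpow B j"
  by (induction i) (simp_all add: matrix_mul_assoc)

lemma mpow_comm: "B ** mpow B k = mpow B k ** B"
  using mpow_add[of B k 1] mpow_add[of B 1 k] by (simp add: add.commute)

lemma mpow_comm_gen: "C ** B = B ** C \<Longrightarrow> C ** mpow B k = mpow B k ** C"
  by (induction k) (simp_all add: matrix_mul_assoc, metis matrix_mul_assoc)

lemma transpose_mpow: "symmetric_mat B \<Longrightarrow> transpose (mpow B k) = mpow B k"
proof (induction k)
  case 0 then show ?case by (simp add: transpose_mat)
next
  case (Suc k) then show ?case
    by (simp add: matrix_transpose_mul symmetric_mat_def mpow_comm)
qed

definition contr_psd :: "real^'n^'n \<Rightarrow> bool" where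
  "contr_psd B \<longleftrightarrow> pos_semidef B \<and> (\<forall>x. x \<bullet> (B *v x) \<le> (norm x)\<^sup>2)"

lemma contr_psd_vec: "contr_psd B \<Longrightarrow> norm (mpow B k *v x) \<le> norm x"
proof (induction k arbitrary: x)
  case 0 then show ?case by simp
next
  case (Suc k)
  have "norm (B *v (mpow B k *v x)) \<le> 1 * norm (mpow B k *v x)"
    using Suc.prems unfolding contr_psd_def by (intro psd_contract) auto
  also have "\<dots> \<le> norm x" using Suc.IH[OF Suc.prems] by simp
  finally show ?case by (simp add: matrix_vector_mul_assoc[symmetric])
qed

lemma contr_psd_norm:
  fixes B :: "real^'n^'n"
  assumes "contr_psd B" shows "norm (mpow B k) \<le> sqrt (CARD('n))"
  using norm_le_of_contract[of "mpow B k" 1] contr_psd_vec[OF assms] by simp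

definition Usr :: "real^'n^'n \<Rightarrow> real^'n^'n" where
  "Usr B = (\<Sum>k. vco k *\<^sub>R mpow B (Suc k))"

lemma Usr_summable:
  assumes "contr_psd (B::real^'n^'n)"
  shows "summable (\<lambda>k. vco k *\<^sub>R mpow B (Suc k))"
proof (rule summable_comparison_test')
  show "summable (\<lambda>k. vco k * sqrt (CARD('n)))" by (intro summable_mult2 vco_summable)
  show "norm (vco k *\<^sub>R mpow B (Suc k)) \<le> vco k * sqrt (CARD('n))" for k
    using contr_psd_norm[OF assms, of "Suc k"] vco_nonneg[of k]
    by (simp add: mult_left_mono)
qed

lemma Usr_sq:
  assumes "contr_psd (B::real^'n^'n)"
  shows "Usr B ** Usr B = 2 *\<^sub>R Usr B - B"
proof -
  define f where "f k = vco k *\<^sub>R mpow B (Suc k)" for k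
  define g where "g = (\<lambda>(i,j). (vco i * vco j) *\<^sub>R mpow B (i + j + 2))"
  define P where "P N = (\<Sum>k<N. f k)" for N
  define sq where "sq N = {..<N} \<times> {..<(N::nat)}" for N
  define tri where "tri N = {(i,j). i + j < (N::nat)}" for N
  have sm: "summable f" unfolding f_def by (rule Usr_summable[OF assms])
  have P: "P \<longlonglongrightarrow> Usr B" unfolding P_def Usr_def f_def[symmetric] by (rule summable_LIMSEQ[OF sm])
  have PP: "(\<lambda>N. P N ** P N) \<longlonglongrightarrow> Usr B ** Usr B"
    by (rule bounded_bilinear.tendsto[OF mm_bb P P])
  have P2: "(\<lambda>N. 2 *\<^sub>R P (Suc N) - B) \<longlonglongrightarrow> 2 *\<^sub>R Usr B - B"
    by (intro tendsto_intros LIMSEQ_Suc[OF P])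
  have e1: "P N ** P N = (\<Sum>x\<in>sq N. g x)" for N
  proof -
    have "P N ** P N = (\<Sum>i<N. \<Sum>j<N. f i ** f j)"
      unfolding P_def apply (simp add: bounded_bilinear.sum_left[OF mm_bb] bounded_bilinear.sum_right[OF mm_bb])
      by (rule sum.swap)
    also have "\<dots> = (\<Sum>i<N. \<Sum>j<N. g (i,j))"
    proof (intro sum.cong refl)
      fix i j
      have m: "mpow B (i + j + 2) = mpow B (Suc i) ** mpow B (Suc j)" using mpow_add[of B "Suc i" "Suc j"] by simp
      show "f i ** f j = g (i,j)" unfolding f_def g_def m
        by (simp del: mpow.simps add: matrix_scalar_ac scalar_matrix_assoc[symmetric] mult.commute mpow_add[symmetric])
    qed
    finally show ?thesis unfolding sq_def by (simp add: sum.cartesian_product)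
  qed
  have e2: "2 *\<^sub>R P (Suc N) - B = (\<Sum>x\<in>tri N. g x)" for N
  proof -
    have "P (Suc N) = f 0 + (\<Sum>k<N. f (Suc k))" unfolding P_def by (rule sum.lessThan_Suc_shift)
    then have "2 *\<^sub>R P (Suc N) - B = (\<Sum>k<N. 2 *\<^sub>R f (Suc k))"
      by (simp add: f_def vco_0 scaleR_sum_right scaleR_add_right)
    also have "\<dots> = (\<Sum>k<N. \<Sum>i\<le>k. g (i, k - i))"
    proof (rule sum.cong[OF refl])
      fix k assume "k \<in> {..<N}"
      have "2 *\<^sub>R f (Suc k) = (\<Sum>i\<le>k. vco i * vco (k - i)) *\<^sub>R mpow B (k + 2)"
        unfolding f_def vco_Suc by simp
      also have "\<dots> = (\<Sum>i\<le>k. (vco i * vco (k - i)) *\<^sub>R mpow B (k + 2))"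
        by (rule scaleR_left.sum)
      also have "\<dots> = (\<Sum>i\<le>k. g (i, k - i))"
        unfolding g_def by (intro sum.cong) auto
      finally show "2 *\<^sub>R f (Suc k) = (\<Sum>i\<le>k. g (i, k - i))" .
    qed
    also have "\<dots> = (\<Sum>x\<in>tri N. g x)"
      unfolding tri_def using sum.triangle_reindex[of "\<lambda>i j. g (i,j)" N] by simp
    finally show ?thesis .
  qed
  have bnd: "norm (P N ** P N - (2 *\<^sub>R P (Suc N) - B))
      \<le> sqrt (CARD('n)) * ((\<Sum>k<N. vco k)\<^sup>2 - (\<Sum>(i,j)\<in>{(i,j). i + j < N}. vco i * vco j))" for N
  proof -
    have fin: "finite (sq N)" unfolding sq_def by simp
    have sub: "tri N \<subseteq> sq N" unfolding tri_def sq_def by auto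
    have "P N ** P N - (2 *\<^sub>R P (Suc N) - B) = (\<Sum>x\<in>sq N - tri N. g x)"
      unfolding e1 e2 using sum.subset_diff[OF sub fin, of g] by simp
    also have "norm \<dots> \<le> (\<Sum>x\<in>sq N - tri N. norm (g x))" by (rule norm_sum)
    also have "\<dots> \<le> (\<Sum>x\<in>sq N - tri N. (case x of (i,j) \<Rightarrow> vco i * vco j) * sqrt (CARD('n)))"
    proof (intro sum_mono)
      fix x assume "x \<in> sq N - tri N"
      obtain i j where x: "x = (i,j)" by force
      show "norm (g x) \<le> (case x of (i,j) \<Rightarrow> vco i * vco j) * sqrt (CARD('n))"
        unfolding x g_def using contr_psd_norm[OF assms, of "i+j+2"] vco_nonneg[of i] vco_nonneg[of j]
        by (simp add: mult_left_mono)
    qed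
    also have "\<dots> = sqrt (CARD('n)) * ((\<Sum>x\<in>sq N. case x of (i,j) \<Rightarrow> vco i * vco j) - (\<Sum>x\<in>tri N. case x of (i,j) \<Rightarrow> vco i * vco j))"
      using sum.subset_diff[OF sub fin, of "\<lambda>x. case x of (i,j) \<Rightarrow> vco i * vco j"]
      by (simp add: sum_distrib_right[symmetric] sum_distrib_left[symmetric] algebra_simps)
    also have "(\<Sum>x\<in>sq N. case x of (i,j) \<Rightarrow> vco i * vco j) = (\<Sum>k<N. vco k)\<^sup>2"
      unfolding sq_def by (simp add: sum.cartesian_product[symmetric] power2_eq_square sum_product)
    finally show ?thesis unfolding tri_def by simp
  qed
  have "(\<lambda>N. P N ** P N - (2 *\<^sub>R P (Suc N) - B)) \<longlonglongrightarrow> 0"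
  proof (rule tendsto_0_le[OF _ _])
    show "(\<lambda>N. sqrt (CARD('n)) * ((\<Sum>k<N. vco k)\<^sup>2 - (\<Sum>(i,j)\<in>{(i,j). i + j < N}. vco i * vco j))) \<longlonglongrightarrow> 0"
      using tendsto_mult_right_zero[OF tri_sum_lim] by simp
    show "\<forall>\<^sub>F N in sequentially. norm (P N ** P N - (2 *\<^sub>R P (Suc N) - B)) \<le>
       norm (sqrt (CARD('n)) * ((\<Sum>k<N. vco k)\<^sup>2 - (\<Sum>(i,j)\<in>{(i,j). i + j < N}. vco i * vco j))) * 1"
      using bnd by (auto intro: always_eventually order_trans[OF _ abs_ge_self])
  qed
  moreover have "(\<lambda>N. P N ** P N - (2 *\<^sub>R P (Suc N) - B)) \<longlonglongrightarrow> Usr B ** Usr B - (2 *\<^sub>R Usr B - B)"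
    by (intro tendsto_intros PP P2)
  ultimately have "Usr B ** Usr B - (2 *\<^sub>R Usr B - B) = 0" using LIMSEQ_unique by blast
  then show ?thesis by simp
qed


lemma norm_transpose: "norm (transpose (A::real^'n^'m)) = norm A"
proof -
  have "(norm (transpose A))\<^sup>2 = (norm A)\<^sup>2"
    unfolding norm_sq_mat transpose_def by simp (rule sum.swap)
  then show ?thesis by (simp add: power2_eq_iff_nonneg)
qed

lemma bounded_linear_transpose: "bounded_linear (transpose :: real^'n^'m \<Rightarrow> real^'m^'n)"
  by (rule bounded_linear_intro[where K=1])
     (auto simp: transpose_def vec_eq_iff norm_transpose[unfolded transpose_def])

lemma transpose_scaleR: "transpose (c *\<^sub>R (A::real^'n^'m)) = c *\<^sub>R transpose A"
  by (simp add: transpose_def vec_eq_iff)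

lemma Usr_sym:
  assumes "contr_psd (B::real^'n^'n)"
  shows "transpose (Usr B) = Usr B"
proof -
  have sB: "symmetric_mat B" using assms unfolding contr_psd_def pos_semidef_def by auto
  have "transpose (Usr B) = (\<Sum>k. transpose (vco k *\<^sub>R mpow B (Suc k)))"
    unfolding Usr_def by (rule bounded_linear.suminf[OF bounded_linear_transpose Usr_summable[OF assms]])
  also have "\<dots> = Usr B" unfolding Usr_def transpose_scaleR transpose_mpow[OF sB] ..
  finally show ?thesis .
qed

lemma Usr_comm:
  assumes "contr_psd (B::real^'n^'n)" and "C ** B = B ** C"
  shows "C ** Usr B = Usr B ** C"
proof -
  have "C ** Usr B = (\<Sum>k. C ** (vco k *\<^sub>R mpow B (Suc k)))"
    unfolding Usr_def by (rule bounded_linear.suminf[OF bounded_bilinear.bounded_linear_right[OF mm_bb] Usr_summable[OF assms(1)]])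
  also have "\<dots> = (\<Sum>k. (vco k *\<^sub>R mpow B (Suc k)) ** C)"
    using mpow_comm_gen[OF assms(2)] by (simp del: mpow.simps add: matrix_scalar_ac scalar_matrix_assoc[symmetric])
  also have "\<dots> = Usr B ** C"
    unfolding Usr_def by (rule bounded_linear.suminf[OF bounded_bilinear.bounded_linear_left[OF mm_bb] Usr_summable[OF assms(1)], symmetric])
  finally show ?thesis .
qed

lemma bounded_linear_qf: "bounded_linear (\<lambda>A::real^'n^'n. x \<bullet> (A *v x))"
  by (intro bounded_linear_compose[OF bounded_linear_inner_right] bounded_bilinear.bounded_linear_left[OF mv_bb])

lemma Usr_qf:
  assumes "contr_psd (B::real^'n^'n)"
  shows "x \<bullet> (Usr B *v x) \<le> (norm x)\<^sup>2"
proof -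
  have sm: "summable (\<lambda>k. vco k *\<^sub>R mpow B (Suc k))" by (rule Usr_summable[OF assms])
  have "x \<bullet> (Usr B *v x) = (\<Sum>k. x \<bullet> ((vco k *\<^sub>R mpow B (Suc k)) *v x))"
    unfolding Usr_def by (rule bounded_linear.suminf[OF bounded_linear_qf sm])
  also have "\<dots> \<le> (\<Sum>k. vco k * (norm x)\<^sup>2)"
  proof (rule suminf_le)
    show "summable (\<lambda>k. x \<bullet> ((vco k *\<^sub>R mpow B (Suc k)) *v x))"
      by (rule bounded_linear.summable[OF bounded_linear_qf sm])
    show "summable (\<lambda>k. vco k * (norm x)\<^sup>2)" by (intro summable_mult2 vco_summable)
    fix k
    have "x \<bullet> (mpow B (Suc k) *v x) \<le> norm x * norm (mpow B (Suc k) *v x)"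
      using Cauchy_Schwarz_ineq2[of x "mpow B (Suc k) *v x"] by simp
    also have "\<dots> \<le> norm x * norm x" using contr_psd_vec[OF assms, of "Suc k" x]
      by (intro mult_left_mono) (simp_all del: mpow.simps)
    finally have "x \<bullet> (mpow B (Suc k) *v x) \<le> (norm x)\<^sup>2" by (simp add: power2_eq_square)
    then show "x \<bullet> ((vco k *\<^sub>R mpow B (Suc k)) *v x) \<le> vco k * (norm x)\<^sup>2"
      using vco_nonneg[of k]
      by (simp del: mpow.simps add: scaleR_matrix_vector_assoc[symmetric] mult_left_mono)
  qed
  also have "\<dots> = (norm x)\<^sup>2" using vco_suminf by (simp add: suminf_mult2[OF vco_summable, symmetric])
  finally show ?thesis .
qed

definition sroot :: "real^'n^'n \<Rightarrow> real^'n^'n" where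
  "sroot A = sqrt (norm A + 1) *\<^sub>R (mat 1 - Usr (mat 1 - (1 / (norm A + 1)) *\<^sub>R A))"

lemma qf_le_norm: "x \<bullet> ((A::real^'n^'n) *v x) \<le> norm A * (norm x)\<^sup>2"
proof -
  have "x \<bullet> (A *v x) \<le> norm x * norm (A *v x)" using Cauchy_Schwarz_ineq2[of x "A *v x"] by simp
  also have "\<dots> \<le> norm x * (norm A * norm x)" by (intro mult_left_mono norm_matrix_vec_le) auto
  finally show ?thesis by (simp add: power2_eq_square mult_ac)
qed

lemma sroot_props:
  assumes A: "pos_semidef (A::real^'n^'n)"
  shows "pos_semidef (sroot A)" "sroot A ** sroot A = A"
    "\<And>C. C ** A = A ** C \<Longrightarrow> C ** sroot A = sroot A ** C"
proof -
  define c where "c = norm A + 1"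
  have c: "c > 0" unfolding c_def by (simp add: add_nonneg_pos)
  define B where "B = mat 1 - (1/c) *\<^sub>R A"
  define U where "U = Usr B"
  have sA: "symmetric_mat A" and nnA: "\<And>x. 0 \<le> x \<bullet> (A *v x)" using A pos_semidef_def by auto
  have qfB: "x \<bullet> (B *v x) = (norm x)\<^sup>2 - (x \<bullet> (A *v x)) / c" for x
    unfolding B_def by (simp add: mv_bb[THEN bounded_bilinear.diff_left] scaleR_matrix_vector_assoc[symmetric]
        inner_diff_right power2_norm_eq_inner)
  have sB: "symmetric_mat B" using sA unfolding B_def symmetric_mat_def
    by (simp add: transpose_def vec_eq_iff mat_def)
  have cB: "contr_psd B"
    unfolding contr_psd_def pos_semidef_def
  proof (intro conjI allI sB)
    fix x :: "real^'n"
    show "x \<bullet> (B *v x) \<le> (norm x)\<^sup>2" using qfB[of x] nnA[of x] c by (simp add: divide_nonneg_pos)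
    have "x \<bullet> (A *v x) \<le> c * (norm x)\<^sup>2"
      using qf_le_norm[of x A] unfolding c_def distrib_right by (smt (verit) zero_le_power2 mult_1)
    then have "(x \<bullet> (A *v x)) / c \<le> (norm x)\<^sup>2" using c by (simp add: divide_le_eq mult.commute)
    then show "0 \<le> x \<bullet> (B *v x)" using qfB[of x] by simp
  qed
  have sroot: "sroot A = sqrt c *\<^sub>R (mat 1 - U)" unfolding sroot_def U_def B_def c_def ..
  have "(mat 1 - U) ** (mat 1 - U) = mat 1 - 2 *\<^sub>R U + U ** U"
    by (simp add: mm_bb[THEN bounded_bilinear.diff_right] mm_bb[THEN bounded_bilinear.diff_left]
        matrix_mul_lid matrix_mul_rid algebra_simps scaleR_2)
  also have "\<dots> = mat 1 - B" unfolding U_def Usr_sq[OF cB] by simp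
  finally have sq1: "(mat 1 - U) ** (mat 1 - U) = (1/c) *\<^sub>R A" unfolding B_def by simp
  show "sroot A ** sroot A = A"
    unfolding sroot using c
    by (simp add: matrix_scalar_ac scalar_matrix_assoc[symmetric] sq1)
  show "pos_semidef (sroot A)"
    unfolding pos_semidef_def symmetric_mat_def sroot
  proof (intro conjI allI)
    show "transpose (sqrt c *\<^sub>R (mat 1 - U)) = sqrt c *\<^sub>R (mat 1 - U)"
      using Usr_sym[OF cB] unfolding U_def transpose_scaleR
      by (simp add: transpose_def vec_eq_iff mat_def)
    fix x :: "real^'n"
    have "x \<bullet> ((mat 1 - U) *v x) = (norm x)\<^sup>2 - x \<bullet> (U *v x)"
      by (simp add: mv_bb[THEN bounded_bilinear.diff_left] inner_diff_right power2_norm_eq_inner)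
    then have "0 \<le> x \<bullet> ((mat 1 - U) *v x)" using Usr_qf[OF cB, of x] unfolding U_def by simp
    then show "0 \<le> x \<bullet> ((sqrt c *\<^sub>R (mat 1 - U)) *v x)"
      using c by (simp add: scaleR_matrix_vector_assoc[symmetric])
  qed
  fix C assume CA: "C ** A = A ** C"
  have "C ** B = B ** C" unfolding B_def using CA
    by (simp add: mm_bb[THEN bounded_bilinear.diff_right] mm_bb[THEN bounded_bilinear.diff_left]
        matrix_mul_lid matrix_mul_rid matrix_scalar_ac scalar_matrix_assoc[symmetric])
  then have "C ** U = U ** C" unfolding U_def by (rule Usr_comm[OF cB])
  then show "C ** sroot A = sroot A ** C" unfolding sroot
    by (simp add: mm_bb[THEN bounded_bilinear.diff_right] mm_bb[THEN bounded_bilinear.diff_left]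
        matrix_mul_lid matrix_mul_rid matrix_scalar_ac scalar_matrix_assoc[symmetric] scaleR_diff_right)
qed

lemma psd_sqrt_eq:
  assumes A: "pos_semidef (A::real^'n^'n)"
  shows "psd_sqrt A = sroot A"
  unfolding psd_sqrt_def
proof (rule the_equality)
  show "pos_semidef (sroot A) \<and> sroot A ** sroot A = A" using sroot_props(1,2)[OF A] by blast
  fix R assume R: "pos_semidef R \<and> R ** R = A"
  have "R ** A = A ** R" using R by (auto simp: matrix_mul_assoc)
  then have "R ** sroot A = sroot A ** R" by (rule sroot_props(3)[OF A])
  moreover have "R ** R = sroot A ** sroot A" using R sroot_props(2)[OF A] by simp
  ultimately show "R = sroot A" using psd_unique[of R "sroot A"] R sroot_props(1)[OF A] by blast
qed

lemma psd_sqrt_props: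
  assumes A: "pos_semidef (A::real^'n^'n)"
  shows "pos_semidef (psd_sqrt A)" "psd_sqrt A ** psd_sqrt A = A"
    "\<And>C. C ** A = A ** C \<Longrightarrow> C ** psd_sqrt A = psd_sqrt A ** C"
  unfolding psd_sqrt_eq[OF A] using sroot_props[OF A] by blast+




lemma continuous_qf: "continuous_on S (\<lambda>x::real^'n. x \<bullet> ((A::real^'n^'n) *v x))"
  by (intro continuous_intros linear_continuous_on bounded_bilinear.bounded_linear_right[OF mv_bb])

lemma qf_scale: "(c *\<^sub>R x) \<bullet> ((A::real^'n^'n) *v (c *\<^sub>R x)) = c\<^sup>2 * (x \<bullet> (A *v x))"
  by (simp add: matrix_vector_mult_scaleR power2_eq_square)

lemma pos_def_lower:
  assumes "pos_def (A::real^'n^'n)"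
  obtains m where "m > 0" "\<And>x. m * (norm x)\<^sup>2 \<le> x \<bullet> (A *v x)"
proof -
  have ne: "sphere (0::real^'n) 1 \<noteq> {}" by (simp add: sphere_eq_empty)
  obtain x0 where x0: "x0 \<in> sphere 0 1" "\<And>y. y \<in> sphere 0 1 \<Longrightarrow> x0 \<bullet> (A *v x0) \<le> y \<bullet> (A *v y)"
    using continuous_attains_inf[OF compact_sphere ne continuous_qf] by blast
  have "x0 \<noteq> 0" using x0(1) by auto
  then have m: "0 < x0 \<bullet> (A *v x0)" using assms pos_def_def by auto
  have "x0 \<bullet> (A *v x0) * (norm x)\<^sup>2 \<le> x \<bullet> (A *v x)" for x
  proof (cases "x = 0")
    case True then show ?thesis by simp
  next
    case False
    define u where "u = (1 / norm x) *\<^sub>R x"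
    have u: "u \<in> sphere 0 1" using False unfolding u_def by simp
    have x: "x = norm x *\<^sub>R u" using False unfolding u_def by simp
    have "x \<bullet> (A *v x) = (norm x)\<^sup>2 * (u \<bullet> (A *v u))" by (subst (1 2) x) (rule qf_scale)
    then show ?thesis using x0(2)[OF u] by (simp add: mult.commute mult_right_mono)
  qed
  then show ?thesis using that m by blast
qed

lemma inner_right_mul: "(E::real^'n^'n) \<bullet> (E ** R) = (\<Sum>i\<in>UNIV. (E $ i) \<bullet> (R *v (E $ i)))"
proof -
  have "E \<bullet> (E ** R) = (\<Sum>i\<in>UNIV. \<Sum>j\<in>UNIV. \<Sum>k\<in>UNIV. E$i$j * E$i$k * R$k$j)"
    by (simp add: inner_vec_def matrix_matrix_mult_def sum_distrib_left mult.assoc)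
  also have "\<dots> = (\<Sum>i\<in>UNIV. \<Sum>k\<in>UNIV. \<Sum>j\<in>UNIV. E$i$j * E$i$k * R$k$j)"
    by (intro sum.cong refl sum.swap)
  also have "\<dots> = (\<Sum>i\<in>UNIV. (E $ i) \<bullet> (R *v (E $ i)))"
    by (simp add: inner_vec_def matrix_vector_mult_def sum_distrib_left mult_ac)
  finally show ?thesis .
qed

lemma inner_left_mul: "(E::real^'n^'n) \<bullet> (R ** E) = (\<Sum>j\<in>UNIV. (column j E) \<bullet> (R *v column j E))"
proof -
  have "E \<bullet> (R ** E) = (\<Sum>i\<in>UNIV. \<Sum>j\<in>UNIV. E$i$j * (\<Sum>k\<in>UNIV. R$i$k * E$k$j))"
    by (simp add: inner_vec_def matrix_matrix_mult_def)
  also have "\<dots> = (\<Sum>j\<in>UNIV. \<Sum>i\<in>UNIV. E$i$j * (\<Sum>k\<in>UNIV. R$i$k * E$k$j))"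
    by (rule sum.swap)
  also have "\<dots> = (\<Sum>j\<in>UNIV. (column j E) \<bullet> (R *v column j E))"
    by (simp add: inner_vec_def matrix_vector_mult_def column_def)
  finally show ?thesis .
qed

lemma sqrt_lip:
  fixes R1 R2 :: "real^'n^'n"
  assumes R1: "pos_semidef R1" and m: "m > 0" "\<And>x. m * (norm x)\<^sup>2 \<le> x \<bullet> (R2 *v x)"
  shows "m * norm (R1 - R2) \<le> norm (R1 ** R1 - R2 ** R2)"
proof -
  define E where "E = R1 - R2"
  have eq: "R1 ** R1 - R2 ** R2 = R1 ** E + E ** R2"
    unfolding E_def by (simp add: mm_bb[THEN bounded_bilinear.diff_right] mm_bb[THEN bounded_bilinear.diff_left])
  have a: "0 \<le> E \<bullet> (R1 ** E)" unfolding inner_left_mul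
    using R1 pos_semidef_def by (auto intro: sum_nonneg)
  have "m * (norm E)\<^sup>2 = (\<Sum>i\<in>UNIV. m * (norm (E $ i))\<^sup>2)"
    by (simp add: norm_vec_def L2_set_def sum_nonneg sum_distrib_left)
  also have "\<dots> \<le> E \<bullet> (E ** R2)" unfolding inner_right_mul by (intro sum_mono m(2))
  finally have b: "m * (norm E)\<^sup>2 \<le> E \<bullet> (E ** R2)" .
  have "m * (norm E)\<^sup>2 \<le> E \<bullet> (R1 ** R1 - R2 ** R2)"
    using a b unfolding eq by (simp add: inner_add_right)
  also have "\<dots> \<le> norm E * norm (R1 ** R1 - R2 ** R2)" by (rule Cauchy_Schwarz_ineq2[THEN order_trans[OF abs_ge_self]])
  finally have c: "m * (norm E)\<^sup>2 \<le> norm E * norm (R1 ** R1 - R2 ** R2)" .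
  show ?thesis
  proof (cases "E = 0")
    case True then show ?thesis unfolding E_def by simp
  next
    case False
    then have "norm E > 0" by simp
    then show ?thesis using c unfolding E_def[symmetric] by (simp add: power2_eq_square mult_ac)
  qed
qed


lemma transpose_plus: "transpose ((A::real^'n^'m) + B) = transpose A + transpose B"
  by (simp add: transpose_def vec_eq_iff)
lemma transpose_minus: "transpose ((A::real^'n^'m) - B) = transpose A - transpose B"
  by (simp add: transpose_def vec_eq_iff)

lemma trace_scaleR: "trace (c *\<^sub>R (A::real^'n^'n)) = c * trace A"
  by (simp add: trace_def sum_distrib_left)

lemma norm_sq_trace: "symmetric_mat (R::real^'n^'n) \<Longrightarrow> (norm R)\<^sup>2 = trace (R ** R)"
  unfolding norm_sq_mat trace_def matrix_matrix_mult_def symmetric_mat_iff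
  by (simp add: power2_eq_square)

lemma norm_mat1: "norm (mat 1 :: real^'n^'n) = sqrt (CARD('n))"
proof -
  have "(norm (mat 1 :: real^'n^'n))\<^sup>2 = trace (mat 1 ** mat 1 :: real^'n^'n)"
    by (rule norm_sq_trace) (simp add: symmetric_mat_def transpose_mat)
  then have "(norm (mat 1 :: real^'n^'n))\<^sup>2 = CARD('n)" by (simp add: trace_I)
  then show ?thesis by (metis norm_ge_zero real_sqrt_unique)
qed

lemma sh_facts:
  fixes S T :: "real^'n^'n"
  assumes S: "symmetric_mat S" and T: "symmetric_mat T" and lam: "0 \<le> lam"
  defines "D \<equiv> S - lam *\<^sub>R T"
  defines "Mx \<equiv> lam *\<^sub>R mat 1 + (1/4) *\<^sub>R (D ** D)"
  defines "R \<equiv> psd_sqrt Mx"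
  shows "symmetric_mat D" "pos_semidef Mx" "pos_semidef R" "R ** R = Mx" "R ** D = D ** R"
     "sigma_hat_Ia S T lam = R + (1/2) *\<^sub>R D"
proof -
  show sD: "symmetric_mat D" using S T unfolding D_def symmetric_mat_def
    by (simp add: transpose_minus transpose_scaleR)
  show pM: "pos_semidef Mx" unfolding pos_semidef_def
  proof (intro conjI allI)
    show "symmetric_mat Mx" using sD unfolding Mx_def symmetric_mat_def
      by (simp add: transpose_plus transpose_scaleR matrix_transpose_mul transpose_mat)
    fix x :: "real^'n"
    have "x \<bullet> (Mx *v x) = lam * (x \<bullet> x) + (1/4) * (x \<bullet> (D *v (D *v x)))"
      unfolding Mx_def
      by (simp add: mv_bb[THEN bounded_bilinear.add_left] scaleR_matrix_vector_assoc[symmetric]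
          inner_add_right matrix_vector_mul_assoc[symmetric])
    also have "x \<bullet> (D *v (D *v x)) = (D *v x) \<bullet> (D *v x)" by (rule sym_inner[OF sD])
    finally show "0 \<le> x \<bullet> (Mx *v x)" using lam by simp
  qed
  show "pos_semidef R" "R ** R = Mx" unfolding R_def using psd_sqrt_props[OF pM] by blast+
  have "D ** Mx = Mx ** D" unfolding Mx_def
    by (simp add: matrix_add_ldistrib matrix_add_rdistrib' matrix_scalar_ac scalar_matrix_assoc[symmetric]
        matrix_mul_assoc)
  then have "D ** R = R ** D" unfolding R_def by (rule psd_sqrt_props(3)[OF pM])
  then show "R ** D = D ** R" by simp
  show "sigma_hat_Ia S T lam = R + (1/2) *\<^sub>R D"
    unfolding sigma_hat_Ia_def R_def Mx_def D_def Let_def ..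
qed

lemma sqrt_le_1_plus:
  assumes "0 \<le> y" shows "sqrt y \<le> 1 + y"
proof -
  have "y \<le> (1 + y)\<^sup>2" using assms by (simp add: power2_eq_square algebra_simps)
  then have "sqrt y \<le> sqrt ((1 + y)\<^sup>2)" by (rule real_sqrt_le_mono)
  also have "\<dots> = 1 + y" using assms by simp
  finally show ?thesis .
qed

lemma sh_bound:
  fixes T :: "real^'n^'n"
  assumes T: "pos_def T"
  shows "\<exists>K. \<forall>S lam. pos_semidef S \<longrightarrow> 0 \<le> lam \<longrightarrow> norm (sigma_hat_Ia S T lam) \<le> K * (1 + norm S)"
proof -
  obtain t where t: "t > 0" "\<And>x. t * (norm x)\<^sup>2 \<le> x \<bullet> (T *v x)" using pos_def_lower[OF T] by blast
  have sT: "symmetric_mat T" using T pos_def_def by auto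
  define p where "p = real CARD('n)"
  have p: "p \<ge> 0" unfolding p_def by simp
  define K where "K = 1 + 2 * (p + norm T) / t + 4 * sqrt p / t"
  have K1: "1 + 2 * (p + norm T) / t \<le> K" and K2: "4 * sqrt p / t \<le> K"
    unfolding K_def using t p by auto
  have K0: "0 \<le> K" using K2 t by (smt (verit) divide_nonneg_pos real_sqrt_ge_zero p)
  show ?thesis
  proof (intro exI allI impI)
    fix S :: "real^'n^'n" and lam :: real
    assume S: "pos_semidef S" and lam: "0 \<le> lam"
    have sS: "symmetric_mat S" using S pos_semidef_def by auto
    define D where "D = S - lam *\<^sub>R T"
    define Mx where "Mx = lam *\<^sub>R mat 1 + (1/4) *\<^sub>R (D ** D)"
    define R where "R = psd_sqrt Mx"
    note F = sh_facts[OF sS sT lam, folded D_def, folded Mx_def, folded R_def]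
    have sR: "symmetric_mat R" using F(3) pos_semidef_def by auto
    have X: "sigma_hat_Ia S T lam = R + (1/2) *\<^sub>R D" by (rule F(6))
    have nD: "norm D \<le> norm S + lam * norm T" unfolding D_def
      using norm_triangle_ineq4[of S "lam *\<^sub>R T"] lam by simp
    show "norm (sigma_hat_Ia S T lam) \<le> K * (1 + norm S)"
    proof (cases "lam * t \<le> 2 * norm S")
      case True
      have "(norm R)\<^sup>2 = trace Mx" using norm_sq_trace[OF sR] F(4) by simp
      also have "\<dots> = lam * p + (1/4) * (norm D)\<^sup>2"
        unfolding Mx_def using norm_sq_trace[OF F(1)]
        by (simp add: trace_add trace_scaleR trace_I p_def)
      also have "\<dots> \<le> (sqrt (lam * p) + norm D / 2)\<^sup>2"
        using lam p by (simp add: power2_eq_square algebra_simps)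
      finally have sq: "(norm R)\<^sup>2 \<le> (sqrt (lam * p) + norm D / 2)\<^sup>2" .
      have "norm R \<le> sqrt (lam * p) + norm D / 2"
        by (rule power2_le_imp_le[OF sq]) (simp add: lam p)
      then have "norm (R + (1/2) *\<^sub>R D) \<le> sqrt (lam * p) + norm D"
        using norm_triangle_ineq[of R "(1/2) *\<^sub>R D"] by simp
      also have "\<dots> \<le> 1 + lam * p + norm S + lam * norm T"
        using sqrt_le_1_plus[of "lam * p"] lam p nD by simp
      also have "\<dots> = 1 + norm S + lam * (p + norm T)" by (simp add: algebra_simps)
      also have "\<dots> \<le> 1 + norm S + (2 * norm S / t) * (p + norm T)"
      proof -
        have "lam \<le> 2 * norm S / t" using True t by (simp add: le_divide_eq)
        then show ?thesis using p by (intro add_left_mono mult_right_mono) auto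
      qed
      also have "\<dots> \<le> K * (1 + norm S)"
      proof -
        have "1 + norm S + (2 * norm S / t) * (p + norm T) = 1 + norm S * (1 + 2 * (p + norm T) / t)"
          by (simp add: algebra_simps)
        also have "\<dots> \<le> 1 + norm S * K" using K1 by (intro add_left_mono mult_left_mono) auto
        also have "\<dots> \<le> K * (1 + norm S)"
        proof -
          have "0 \<le> 2 * (p + norm T) / t" using t p by simp
          then have "1 \<le> K" using K1 by linarith
          then show ?thesis by (simp add: algebra_simps)
        qed
        finally show ?thesis .
      qed
      finally show ?thesis using X by simp
    next
      case False
      then have lt: "2 * norm S < lam * t" by simp
      then have lam0: "lam > 0" using t lam by (smt (verit) mult_nonneg_nonneg norm_ge_zero mult_eq_0_iff)
      define Y where "Y = R - (1/2) *\<^sub>R D"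
      define X where "X = R + (1/2) *\<^sub>R D"
      define c where "c = lam * t / 4"
      have c: "c > 0" unfolding c_def using lam0 t by simp
      have sY: "symmetric_mat Y" using sR F(1) unfolding Y_def symmetric_mat_def
        by (simp add: transpose_minus transpose_scaleR)
      have sX: "symmetric_mat X" using sR F(1) unfolding X_def symmetric_mat_def
        by (simp add: transpose_plus transpose_scaleR)
      have qY: "c * (norm x)\<^sup>2 \<le> x \<bullet> (Y *v x)" for x
      proof -
        have q: "x \<bullet> (Y *v x) = x \<bullet> (R *v x) - (1/2) * (x \<bullet> (S *v x)) + (1/2) * lam * (x \<bullet> (T *v x))"
          unfolding Y_def D_def
          by (simp add: mv_bb[THEN bounded_bilinear.diff_left] scaleR_matrix_vector_assoc[symmetric]
              inner_diff_right algebra_simps)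
        have "0 \<le> x \<bullet> (R *v x)" using F(3) pos_semidef_def by auto
        moreover have "x \<bullet> (S *v x) \<le> norm S * (norm x)\<^sup>2" by (rule qf_le_norm)
        moreover have "lam * (t * (norm x)\<^sup>2) \<le> lam * (x \<bullet> (T *v x))"
          using t(2) lam by (intro mult_left_mono) auto
        moreover have "norm S * (norm x)\<^sup>2 \<le> (lam * t / 2) * (norm x)\<^sup>2"
          using lt by (intro mult_right_mono) auto
        ultimately show ?thesis unfolding q c_def by (simp add: algebra_simps)
      qed
      have XY: "X ** Y = lam *\<^sub>R mat 1" and YX: "Y ** X = lam *\<^sub>R mat 1"
      proof -
        have "X ** Y = R ** R - (1/4) *\<^sub>R (D ** D)" "Y ** X = R ** R - (1/4) *\<^sub>R (D ** D)"
          unfolding X_def Y_def using F(5)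
          by (simp_all add: mm_bb[THEN bounded_bilinear.diff_right] mm_bb[THEN bounded_bilinear.diff_left]
              matrix_add_ldistrib matrix_add_rdistrib' matrix_scalar_ac scalar_matrix_assoc[symmetric] algebra_simps)
        then show "X ** Y = lam *\<^sub>R mat 1" "Y ** X = lam *\<^sub>R mat 1" unfolding F(4) Mx_def by simp_all
      qed
      have qX: "0 \<le> x \<bullet> (X *v x) \<and> x \<bullet> (X *v x) \<le> (4 / t) * (norm x)\<^sup>2" for x
      proof -
        define z where "z = (1 / lam) *\<^sub>R (X *v x)"
        have Yz: "Y *v z = x" unfolding z_def using lam0
          by (simp add: matrix_vector_mult_scaleR matrix_vector_mul_assoc YX scaleR_matrix_vector_assoc[symmetric])
        have XYz: "X *v (Y *v z) = lam *\<^sub>R z"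
          by (simp add: matrix_vector_mul_assoc XY scaleR_matrix_vector_assoc[symmetric])
        have e: "x \<bullet> (X *v x) = lam * (z \<bullet> (Y *v z))"
        proof -
          have "x \<bullet> (X *v x) = (Y *v z) \<bullet> (lam *\<^sub>R z)" using Yz XYz by simp
          also have "\<dots> = lam * ((Y *v z) \<bullet> z)" by simp
          also have "(Y *v z) \<bullet> z = z \<bullet> (Y *v z)" by (simp add: inner_commute)
          finally show ?thesis .
        qed
        have q1: "c * (norm z)\<^sup>2 \<le> z \<bullet> (Y *v z)" by (rule qY)
        have q2: "z \<bullet> (Y *v z) \<le> norm z * norm x"
          using Cauchy_Schwarz_ineq2[of z "Y *v z"] Yz by simp
        have nz: "norm z \<le> norm x / c"
        proof (cases "z = 0")
          case True then show ?thesis using c by simp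
        next
          case False
          have h: "c * (norm z)\<^sup>2 \<le> norm z * norm x" using q1 q2 by linarith
          then have "(c * norm z) * norm z \<le> norm x * norm z"
            by (metis power2_eq_square mult.assoc mult.commute)
          then have "c * norm z \<le> norm x" using False by (simp add: mult_right_le_imp_le)
          then show ?thesis using c by (simp add: le_divide_eq mult.commute)
        qed
        have "z \<bullet> (Y *v z) \<le> (norm x / c) * norm x"
          using q2 nz by (meson mult_right_mono norm_ge_zero order_trans)
        then have "lam * (z \<bullet> (Y *v z)) \<le> lam * ((norm x / c) * norm x)" using lam by (rule mult_left_mono)
        also have "\<dots> = (4 / t) * (norm x)\<^sup>2" unfolding c_def using lam0 t by (simp add: power2_eq_square field_simps)
        finally have up: "x \<bullet> (X *v x) \<le> (4 / t) * (norm x)\<^sup>2" using e by simp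
        have "0 \<le> z \<bullet> (Y *v z)" using q1 c by (smt (verit) mult_nonneg_nonneg zero_le_power2)
        then have "0 \<le> x \<bullet> (X *v x)" using e lam by simp
        then show ?thesis using up by simp
      qed
      have pX: "pos_semidef X" unfolding pos_semidef_def using sX qX by auto
      have "norm (X *v x) \<le> (4 / t) * norm x" for x
        by (rule psd_contract[OF pX]) (use qX in auto)
      then have "norm X \<le> sqrt p * (4 / t)" unfolding p_def by (rule norm_le_of_contract)
      also have "\<dots> = 4 * sqrt p / t" by simp
      also have "\<dots> \<le> K" by (rule K2)
      also have "\<dots> \<le> K * (1 + norm S)" using K0 by (simp add: algebra_simps)
      finally show ?thesis using X X_def by simp
    qed
  qed
qed


lemma half_split: "(a::'a::real_vector) + (1/2) *\<^sub>R b - c = (a - (1/2) *\<^sub>R c) + (1/2) *\<^sub>R (b - c)"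
proof -
  have "c = (1/2) *\<^sub>R c + (1/2) *\<^sub>R c" by (simp add: scaleR_add_left[symmetric])
  then show ?thesis by (metis (no_types, lifting) add_diff_eq diff_add_eq diff_diff_eq scaleR_diff_right)
qed

lemma sh_cont:
  fixes Sig T :: "real^'n^'n"
  assumes Sig: "pos_def Sig" and T: "pos_def T"
  shows "\<exists>Kc. \<forall>S lam. symmetric_mat S \<longrightarrow> 0 \<le> lam \<longrightarrow> lam \<le> 1 \<longrightarrow> norm (S - Sig) \<le> 1 \<longrightarrow>
            norm (sigma_hat_Ia S T lam - Sig) \<le> Kc * (norm (S - Sig) + lam)"
proof -
  obtain m where m: "m > 0" "\<And>x. m * (norm x)\<^sup>2 \<le> x \<bullet> (Sig *v x)" using pos_def_lower[OF Sig] by blast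
  have sT: "symmetric_mat T" using T pos_def_def by auto
  define H where "H = (1/2) *\<^sub>R Sig"
  have mH: "(m/2) * (norm x)\<^sup>2 \<le> x \<bullet> (H *v x)" for x
    using m(2)[of x] unfolding H_def by (simp add: scaleR_matrix_vector_assoc[symmetric])
  define tau where "tau = norm T"
  define p where "p = real CARD('n)"
  define s where "s = norm Sig"
  have tau: "0 \<le> tau" "0 \<le> s" unfolding tau_def s_def by simp_all
  define A0 where "A0 = sqrt p + (2 * s + 2 * (1 + tau)) * (1 + tau) / 4"
  define Kc where "Kc = (2 / m) * A0 + (1 + tau) / 2"
  show ?thesis
  proof (intro exI allI impI)
    fix S :: "real^'n^'n" and lam :: real
    assume sS: "symmetric_mat S" and lam: "0 \<le> lam" "lam \<le> 1" and nS: "norm (S - Sig) \<le> 1"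
    define d where "d = norm (S - Sig) + lam"
    have d: "0 \<le> d" "d \<le> 2" "norm (S - Sig) \<le> d" "lam \<le> d" unfolding d_def using lam nS by auto
    define D where "D = S - lam *\<^sub>R T"
    define Mx where "Mx = lam *\<^sub>R mat 1 + (1/4) *\<^sub>R (D ** D)"
    define R where "R = psd_sqrt Mx"
    note F = sh_facts[OF sS sT lam(1), folded D_def, folded Mx_def, folded R_def]
    define e where "e = norm (D - Sig)"
    have eqD: "D - Sig = (S - Sig) - lam *\<^sub>R T" unfolding D_def by simp
    have "e \<le> norm (S - Sig) + lam * tau" unfolding e_def tau_def eqD
      using norm_triangle_ineq4[of "S - Sig" "lam *\<^sub>R T"] lam by simp
    also have "\<dots> \<le> d + d * tau" using d tau by (intro add_mono mult_right_mono) auto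
    finally have e: "e \<le> (1 + tau) * d" by (simp add: algebra_simps)
    have e0: "0 \<le> e" unfolding e_def by simp
    have "(1 + tau) * d \<le> (1 + tau) * 2" using d tau by (intro mult_left_mono) auto
    then have e2: "e \<le> 2 * (1 + tau)" using e by (simp add: mult.commute)
    have nD: "norm D \<le> s + e" unfolding e_def s_def using norm_triangle_ineq[of Sig "D - Sig"] by simp
    have "D ** D - Sig ** Sig = D ** (D - Sig) + (D - Sig) ** Sig"
      by (simp add: mm_bb[THEN bounded_bilinear.diff_right] mm_bb[THEN bounded_bilinear.diff_left])
    then have "norm (D ** D - Sig ** Sig) \<le> norm (D ** (D - Sig)) + norm ((D - Sig) ** Sig)"
      by (simp add: norm_triangle_ineq)
    also have "\<dots> \<le> norm D * e + e * s"
      unfolding e_def s_def by (intro add_mono norm_matrix_mul_le)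
    also have "\<dots> \<le> (s + e) * e + e * s" using nD e0 by (simp add: mult_right_mono)
    also have "\<dots> = (2 * s + e) * e" by (simp add: algebra_simps)
    also have "\<dots> \<le> (2 * s + 2 * (1 + tau)) * ((1 + tau) * d)"
      using e e2 e0 tau by (intro mult_mono) auto
    finally have DD: "norm (D ** D - Sig ** Sig) \<le> (2 * s + 2 * (1 + tau)) * (1 + tau) * d" by (simp add: mult_ac)
    have "Mx - H ** H = lam *\<^sub>R mat 1 + (1/4) *\<^sub>R (D ** D - Sig ** Sig)"
      unfolding Mx_def H_def by (simp add: matrix_scalar_ac scalar_matrix_assoc[symmetric] algebra_simps)
    then have "norm (Mx - H ** H) \<le> lam * sqrt p + (1/4) * norm (D ** D - Sig ** Sig)"
      using norm_triangle_ineq[of "lam *\<^sub>R mat 1" "(1/4) *\<^sub>R (D ** D - Sig ** Sig)"] lam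
      by (simp add: norm_mat1 p_def)
    also have "\<dots> \<le> d * sqrt p + (1/4) * ((2 * s + 2 * (1 + tau)) * (1 + tau) * d)"
      using d DD unfolding p_def by (intro add_mono mult_right_mono mult_left_mono) auto
    also have "\<dots> = A0 * d" unfolding A0_def by (simp add: algebra_simps)
    finally have MH: "norm (Mx - H ** H) \<le> A0 * d" .
    have "(m/2) * norm (R - H) \<le> norm (R ** R - H ** H)"
      by (rule sqrt_lip[OF F(3)]) (use m mH in auto)
    then have "(m/2) * norm (R - H) \<le> A0 * d" using MH F(4) by simp
    then have RH: "norm (R - H) \<le> (2 / m) * A0 * d" using m(1) by (simp add: field_simps)
    have "sigma_hat_Ia S T lam - Sig = (R - H) + (1/2) *\<^sub>R (D - Sig)"
      unfolding F(6) H_def by (rule half_split)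
    then have "norm (sigma_hat_Ia S T lam - Sig) \<le> norm (R - H) + (1/2) * e"
      unfolding e_def using norm_triangle_ineq[of "R - H" "(1/2) *\<^sub>R (D - Sig)"] by simp
    also have "\<dots> \<le> (2 / m) * A0 * d + (1/2) * ((1 + tau) * d)" using RH e by simp
    also have "\<dots> = Kc * d" unfolding Kc_def by (simp add: algebra_simps)
    finally show "norm (sigma_hat_Ia S T lam - Sig) \<le> Kc * (norm (S - Sig) + lam)" unfolding d_def .
  qed
qed




lemma cont_nth[continuous_intros]: "continuous_on S f \<Longrightarrow> continuous_on S (\<lambda>x. (f x :: 'a::real_normed_vector^'n) $ i)"
  by (rule bounded_linear.continuous_on[OF bounded_linear_vec_nth])

lemma cont_mm[continuous_intros]: "continuous_on S f \<Longrightarrow> continuous_on S g \<Longrightarrow>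
   continuous_on S (\<lambda>x. (f x :: real^'m^'n) ** (g x :: real^'k^'m))"
  by (rule bounded_bilinear.continuous_on[OF mm_bb])

lemma cont_mpow[continuous_intros]: "continuous_on S f \<Longrightarrow> continuous_on S (\<lambda>x. mpow (f x :: real^'n^'n) k)"
  by (induction k) (auto intro!: continuous_intros)

lemma meas_nth[measurable (raw)]:
  "f \<in> borel_measurable M \<Longrightarrow> (\<lambda>x. (f x :: 'b::real_normed_vector^'n) $ i) \<in> borel_measurable M"
  by (rule borel_measurable_continuous_on[of "\<lambda>v. v $ i"]) (auto intro: continuous_intros continuous_on_id)

lemma cont_det: "continuous_on S (\<lambda>A::real^'n^'n. det A)"
  unfolding det_def by (intro continuous_intros)

lemma matrix_inv_props:
  assumes "invertible (A::real^'n^'n)"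
  shows "A ** matrix_inv A = mat 1" "matrix_inv A ** A = mat 1"
  using someI_ex[OF assms[unfolded invertible_def]] unfolding matrix_inv_def by blast+

lemma matrix_inv_noninv:
  assumes "\<not> invertible (A::real^'n^'n)"
  shows "matrix_inv A = (SOME A'::real^'n^'n. False)"
proof -
  have "(\<lambda>A'. A ** A' = mat 1 \<and> A' ** A = mat 1) = (\<lambda>A'. False)"
    using assms unfolding invertible_def by auto
  then show ?thesis unfolding matrix_inv_def by simp
qed

definition crm :: "real^'n^'n \<Rightarrow> real^'n^'n" where
  "crm A = (\<chi> i k. det (\<chi> r c. if c = i then (if r = k then 1 else 0) else A$r$c) / det A)"

lemma cramer_inv:
  assumes d: "det (A::real^'n^'n) \<noteq> 0"
  shows "matrix_inv A = crm A"
proof -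
  have inv: "invertible A" using d invertible_det_nz by blast
  define B where "B = matrix_inv A"
  have AB: "A ** B = mat 1" unfolding B_def by (rule matrix_inv_props[OF inv])
  have "B $ i $ k = crm A $ i $ k" for i k
  proof -
    have "A *v (B *v axis k 1) = axis k 1"
      by (simp add: matrix_vector_mul_assoc AB)
    then have "B *v axis k 1 = (\<chi> j. det (\<chi> r c. if c = j then axis k 1 $ r else A $ r $ c) / det A)"
      using cramer[OF d] by blast
    then have "(B *v axis k 1) $ i = det (\<chi> r c. if c = i then axis k 1 $ r else A $ r $ c) / det A"
      by simp
    moreover have "(B *v axis k 1) $ i = B $ i $ k"
      by (simp add: matrix_vector_mult_basis column_def)
    moreover have "(\<chi> r c. if c = i then axis k 1 $ r else A $ r $ c) = (\<chi> r c. if c = i then (if r = k then 1 else 0) else A$r$c)"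
      by (simp add: axis_def vec_eq_iff)
    ultimately show ?thesis unfolding crm_def by simp
  qed
  then show ?thesis unfolding B_def by (simp add: vec_eq_iff)
qed

lemma cont_repl: "continuous_on S (\<lambda>A::real^'n^'n. \<chi> r c. if c = i then e r else A$r$c)"
proof (intro continuous_on_vec_lambda)
  fix r c show "continuous_on S (\<lambda>A::real^'n^'n. if c = i then e r else A$r$c)"
    by (cases "c = i") (auto intro!: continuous_intros)
qed

lemma cont_crm: "continuous_on {A::real^'n^'n. det A \<noteq> 0} crm"
  unfolding crm_def
proof (intro continuous_on_vec_lambda continuous_on_divide)
  fix i k :: 'n
  show "continuous_on {A::real^'n^'n. det A \<noteq> 0} (\<lambda>x. det (\<chi> r c. if c = i then if r = k then 1 else 0 else x $ r $ c))"
    by (rule continuous_on_compose2[OF cont_det cont_repl]) auto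
qed (auto intro: cont_det)

lemma matrix_inv_eq_if: "matrix_inv (A::real^'n^'n) = (if A \<in> {A. det A = 0} then (SOME A'::real^'n^'n. False) else crm A)"
  using matrix_inv_noninv cramer_inv invertible_det_nz by auto

lemma matrix_inv_measurable: "(matrix_inv :: real^'n^'n \<Rightarrow> real^'n^'n) \<in> borel_measurable borel"
proof -
  have "(\<lambda>A::real^'n^'n. if A \<in> {A. det A = 0} then (SOME A'::real^'n^'n. False) else crm A) \<in> borel_measurable borel"
  proof (rule borel_measurable_continuous_on_if)
    show "{A::real^'n^'n. det A = 0} \<in> sets borel"
      by (intro borel_closed closed_Collect_eq cont_det continuous_on_const)
    show "continuous_on (- {A::real^'n^'n. det A = 0}) crm"
      using cont_crm by (simp add: Compl_eq set_eq_iff)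
  qed (rule continuous_on_const)
  moreover have "matrix_inv = (\<lambda>A::real^'n^'n. if A \<in> {A. det A = 0} then (SOME A'::real^'n^'n. False) else crm A)"
    by (rule ext) (rule matrix_inv_eq_if)
  ultimately show ?thesis by simp
qed

lemma matrix_inv_isCont:
  assumes "det (A::real^'n^'n) \<noteq> 0"
  shows "isCont matrix_inv A"
proof -
  have op: "open {A::real^'n^'n. det A \<noteq> 0}"
    by (intro open_Collect_neq cont_det continuous_on_const)
  have "continuous_on {A::real^'n^'n. det A \<noteq> 0} matrix_inv"
    using cont_crm by (rule continuous_on_cong[THEN iffD1, rotated 2]) (auto simp: cramer_inv)
  then show ?thesis using continuous_on_interior[of _ matrix_inv A] op assms
    by (simp add: interior_open)
qed


lemma contr_of_psd:
  assumes A: "pos_semidef (A::real^'n^'n)"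
  shows "contr_psd (mat 1 - (1 / (norm A + 1)) *\<^sub>R A)"
proof -
  define c where "c = norm A + 1"
  have c: "c > 0" unfolding c_def by (simp add: add_nonneg_pos)
  define B where "B = mat 1 - (1/c) *\<^sub>R A"
  have sA: "symmetric_mat A" and nnA: "\<And>x. 0 \<le> x \<bullet> (A *v x)" using A pos_semidef_def by auto
  have qfB: "x \<bullet> (B *v x) = (norm x)\<^sup>2 - (x \<bullet> (A *v x)) / c" for x
    unfolding B_def by (simp add: mv_bb[THEN bounded_bilinear.diff_left] scaleR_matrix_vector_assoc[symmetric]
        inner_diff_right power2_norm_eq_inner)
  have sB: "symmetric_mat B" using sA unfolding B_def symmetric_mat_def
    by (simp add: transpose_def vec_eq_iff mat_def)
  have "contr_psd B"
    unfolding contr_psd_def pos_semidef_def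
  proof (intro conjI allI sB)
    fix x :: "real^'n"
    show "x \<bullet> (B *v x) \<le> (norm x)\<^sup>2" using qfB[of x] nnA[of x] c by (simp add: divide_nonneg_pos)
    have "x \<bullet> (A *v x) \<le> c * (norm x)\<^sup>2"
      using qf_le_norm[of x A] unfolding c_def distrib_right by (smt (verit) zero_le_power2 mult_1)
    then have "(x \<bullet> (A *v x)) / c \<le> (norm x)\<^sup>2" using c by (simp add: divide_le_eq mult.commute)
    then show "0 \<le> x \<bullet> (B *v x)" using qfB[of x] by simp
  qed
  then show ?thesis unfolding B_def c_def .
qed

definition psq :: "nat \<Rightarrow> real^'n^'n \<Rightarrow> real^'n^'n" where
  "psq N A = sqrt (norm A + 1) *\<^sub>R (mat 1 - (\<Sum>k<N. vco k *\<^sub>R mpow (mat 1 - (1 / (norm A + 1)) *\<^sub>R A) (Suc k)))"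

lemma cont_psq: "continuous_on UNIV (psq N :: real^'n^'n \<Rightarrow> real^'n^'n)"
proof -
  have ne: "norm (x::real^'n^'n) + 1 \<noteq> 0" for x by (smt (verit) norm_ge_zero)
  show ?thesis unfolding psq_def
    by (intro continuous_intros continuous_on_sum) (auto simp: ne)
qed

lemma psq_lim:
  assumes A: "pos_semidef (A::real^'n^'n)"
  shows "(\<lambda>N. psq N A) \<longlonglongrightarrow> psd_sqrt A"
proof -
  define B where "B = mat 1 - (1 / (norm A + 1)) *\<^sub>R A"
  have cB: "contr_psd B" unfolding B_def by (rule contr_of_psd[OF A])
  have L: "(\<lambda>N. \<Sum>k<N. vco k *\<^sub>R mpow B (Suc k)) \<longlonglongrightarrow> Usr B"
    unfolding Usr_def by (rule summable_LIMSEQ[OF Usr_summable[OF cB]])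
  have "(\<lambda>N. sqrt (norm A + 1) *\<^sub>R (mat 1 - (\<Sum>k<N. vco k *\<^sub>R mpow B (Suc k))))
      \<longlonglongrightarrow> sqrt (norm A + 1) *\<^sub>R (mat 1 - Usr B)"
    by (intro tendsto_intros L)
  then show ?thesis unfolding psd_sqrt_eq[OF A] sroot_def psq_def B_def .
qed

lemma psd_sqrt_meas:
  assumes g: "g \<in> borel_measurable M" and psd: "\<And>w. w \<in> space M \<Longrightarrow> pos_semidef (g w :: real^'n^'n)"
  shows "(\<lambda>w. psd_sqrt (g w)) \<in> borel_measurable M"
proof (rule borel_measurable_LIMSEQ_metric)
  show "(\<lambda>w. psq N (g w)) \<in> borel_measurable M" for N
    by (rule borel_measurable_continuous_on[OF cont_psq g])
  show "(\<lambda>N. psq N (g w)) \<longlonglongrightarrow> psd_sqrt (g w)" if "w \<in> space M" for w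
    by (rule psq_lim[OF psd[OF that]])
qed

lemma mm_meas:
  assumes "f \<in> borel_measurable M" "g \<in> borel_measurable M"
  shows "(\<lambda>w. (f w :: real^'n^'n) ** (g w :: real^'n^'n)) \<in> borel_measurable M"
  by (rule borel_measurable_continuous_Pair[OF assms]) (intro continuous_intros)

lemma sh_meas:
  fixes S :: "'a \<Rightarrow> real^'n^'n"
  assumes S: "S \<in> borel_measurable M" and lam: "lam \<in> borel_measurable M"
    and sS: "\<And>w. w \<in> space M \<Longrightarrow> symmetric_mat (S w)" and l0: "\<And>w. w \<in> space M \<Longrightarrow> 0 \<le> lam w"
    and sT: "symmetric_mat T"
  shows "(\<lambda>w. sigma_hat_Ia (S w) T (lam w)) \<in> borel_measurable M"
proof -
  define D where "D w = S w - lam w *\<^sub>R T" for w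
  have mD: "D \<in> borel_measurable M" unfolding D_def using S lam by measurable
  define Mx where "Mx w = lam w *\<^sub>R mat 1 + (1/4) *\<^sub>R (D w ** D w)" for w
  have mMx: "Mx \<in> borel_measurable M" unfolding Mx_def using lam mm_meas[OF mD mD] by measurable
  have "(\<lambda>w. psd_sqrt (Mx w)) \<in> borel_measurable M"
    by (rule psd_sqrt_meas[OF mMx]) (use sh_facts(2)[OF sS sT l0] in \<open>simp add: Mx_def D_def\<close>)
  then have "(\<lambda>w. psd_sqrt (Mx w) + (1/2) *\<^sub>R D w) \<in> borel_measurable M" using mD by measurable
  then show ?thesis unfolding sigma_hat_Ia_def Let_def Mx_def D_def .
qed

lemma cont_outer: "continuous_on UNIV (outer :: real^'n \<Rightarrow> real^'n^'n)"
  unfolding outer_def by (intro continuous_on_vec_lambda continuous_intros)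

lemma sample_cov_meas:
  assumes "\<And>i. Y i \<in> borel_measurable M"
  shows "(\<lambda>w. sample_cov Y n w :: real^'n^'n) \<in> borel_measurable M"
  unfolding sample_cov_def
  by (intro borel_measurable_scaleR borel_measurable_const borel_measurable_sum
      borel_measurable_continuous_on[OF cont_outer] assms)

lemma outer_qf: "x \<bullet> (outer y *v x) = (y \<bullet> x)\<^sup>2"
proof -
  have "outer y *v x = (y \<bullet> x) *\<^sub>R y"
    by (simp add: outer_def matrix_vector_mult_def vec_eq_iff inner_vec_def sum_distrib_left mult_ac)
  then show ?thesis by (simp add: power2_eq_square inner_commute)
qed

lemma sample_cov_psd: "pos_semidef (sample_cov Y n w :: real^'n^'n)"
  unfolding pos_semidef_def
proof (intro conjI allI)
  show "symmetric_mat (sample_cov Y n w)"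
    unfolding symmetric_mat_iff sample_cov_def outer_def by (simp add: mult.commute)
  fix x :: "real^'n"
  have "x \<bullet> (sample_cov Y n w *v x) = (1 / real n) * (\<Sum>i<n. x \<bullet> (outer (Y i w) *v x))"
    unfolding sample_cov_def
    by (simp add: scaleR_matrix_vector_assoc[symmetric] bounded_bilinear.sum_left[OF mv_bb] inner_sum_right)
  also have "\<dots> \<ge> 0" unfolding outer_qf by (intro mult_nonneg_nonneg sum_nonneg) auto
  finally show "0 \<le> x \<bullet> (sample_cov Y n w *v x)" .
qed




lemma exp_sq_bound: "x\<^sup>2 \<le> 4 * exp \<bar>x::real\<bar>"
proof -
  define y where "y = \<bar>x\<bar>"
  have y: "0 \<le> y" unfolding y_def by simp
  have "y / 2 \<le> exp (y / 2)" using exp_ge_add_one_self[of "y/2"] by linarith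
  then have "(y/2)\<^sup>2 \<le> (exp (y/2))\<^sup>2" using y by (intro power_mono) auto
  also have "(exp (y/2))\<^sup>2 = exp y" by (simp add: power2_eq_square exp_add[symmetric])
  finally have "y\<^sup>2 \<le> 4 * exp y" by (simp add: power_divide)
  then show ?thesis unfolding y_def by simp
qed

lemma exp_abs_le: "exp \<bar>x::real\<bar> \<le> exp x + exp (- x)"
  by (cases "x \<ge> 0") (auto simp: add_increasing add_increasing2)

lemma taylor2: "exp y - 1 - y \<le> exp \<bar>y::real\<bar> * y\<^sup>2 / 2"
proof -
  obtain t where t: "\<bar>t\<bar> \<le> \<bar>y\<bar>" "exp y = (\<Sum>m<2. y ^ m / fact m) + exp t / fact 2 * y ^ 2"
    using Maclaurin_exp_le[of y 2] by blast
  have e: "exp y - 1 - y = exp t / 2 * y\<^sup>2" using t(2) by (simp add: eval_nat_numeral)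
  have "exp t \<le> exp \<bar>y\<bar>" using t(1) by simp
  then have "exp t / 2 * y\<^sup>2 \<le> exp \<bar>y\<bar> / 2 * y\<^sup>2" by (intro mult_right_mono) auto
  then show ?thesis using e by simp
qed

lemma h_bounds:
  fixes x m :: real
  assumes m: "1 \<le> m"
  shows "0 \<le> m\<^sup>2 * (exp (x / m) + exp (- x / m) - 2)"
    "m\<^sup>2 * (exp (x / m) + exp (- x / m) - 2) \<le> x\<^sup>2 * exp \<bar>x\<bar>"
proof -
  have "1 + x/m \<le> exp (x/m)" "1 + (-x/m) \<le> exp (-x/m)" using exp_ge_add_one_self by blast+
  then have "0 \<le> exp (x / m) + exp (- x / m) - 2" by linarith
  then show "0 \<le> m\<^sup>2 * (exp (x / m) + exp (- x / m) - 2)" by simp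
  have a: "exp (x/m) - 1 - x/m \<le> exp \<bar>x/m\<bar> * (x/m)\<^sup>2 / 2" by (rule taylor2)
  have b: "exp (-x/m) - 1 - (-x/m) \<le> exp \<bar>-x/m\<bar> * (-x/m)\<^sup>2 / 2" by (rule taylor2)
  have "exp (x / m) + exp (- x / m) - 2 \<le> exp \<bar>x/m\<bar> * (x/m)\<^sup>2" using a b by simp
  also have "\<dots> \<le> exp \<bar>x\<bar> * (x/m)\<^sup>2"
  proof -
    have "\<bar>x/m\<bar> \<le> \<bar>x\<bar>" using m by (simp add: abs_divide divide_le_eq_1 mult_le_cancel_left1 abs_mult divide_le_eq)
    then show ?thesis by (intro mult_right_mono) auto
  qed
  finally have "m\<^sup>2 * (exp (x / m) + exp (- x / m) - 2) \<le> m\<^sup>2 * (exp \<bar>x\<bar> * (x/m)\<^sup>2)"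
    by (intro mult_left_mono) auto
  also have "\<dots> = x\<^sup>2 * exp \<bar>x\<bar>" using m by (simp add: power_divide)
  finally show "m\<^sup>2 * (exp (x / m) + exp (- x / m) - 2) \<le> x\<^sup>2 * exp \<bar>x\<bar>" .
qed

lemma q_lim: "((\<lambda>y. (exp y - 1) / y) \<longlongrightarrow> 1) (at (0::real))"
  using DERIV_exp[of 0] unfolding has_field_derivative_iff by simp

lemma filterlim_scaled_inv:
  assumes "a \<noteq> (0::real)"
  shows "filterlim (\<lambda>m. a * inverse (real (Suc m))) (at 0) sequentially"
  unfolding filterlim_at
proof
  show "\<forall>\<^sub>F m in sequentially. a * inverse (real (Suc m)) \<in> UNIV \<and> a * inverse (real (Suc m)) \<noteq> 0"
    using assms by simp
  show "((\<lambda>m. a * inverse (real (Suc m))) \<longlongrightarrow> 0) sequentially"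
    using tendsto_mult_right_zero[OF LIMSEQ_inverse_real_of_nat] by simp
qed

lemma aux_r1: "(r::real) \<noteq> 0 \<Longrightarrow> r\<^sup>2 * ((x/2) * inverse r)\<^sup>2 = x\<^sup>2 / 4"
  by (simp add: field_simps power2_eq_square)
lemma aux_r2: "(r::real) \<noteq> 0 \<Longrightarrow> r\<^sup>2 * ((c/2) * inverse r * inverse r) = c / 2"
  by (simp add: field_simps power2_eq_square)
lemma aux_r3: "(r::real) \<noteq> 0 \<Longrightarrow> c / (2 * r\<^sup>2) = (c/2) * inverse r * inverse r"
  by (simp add: field_simps power2_eq_square)

lemma h_lim: "(\<lambda>m. (real (Suc m))\<^sup>2 * (exp (x / real (Suc m)) + exp (- x / real (Suc m)) - 2)) \<longlonglongrightarrow> x\<^sup>2"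
proof (cases "x = 0")
  case True then show ?thesis by simp
next
  case False
  define q where "q y = (exp y - 1) / y" for y :: real
  define u where "u m = (x/2) * inverse (real (Suc m))" for m
  have fu: "filterlim u (at 0) sequentially" unfolding u_def by (rule filterlim_scaled_inv) (use False in simp)
  have fu': "filterlim (\<lambda>m. - u m) (at 0) sequentially" unfolding u_def
    using filterlim_scaled_inv[of "-x/2"] False by simp
  have Q1: "(\<lambda>m. q (u m)) \<longlonglongrightarrow> 1" unfolding q_def by (rule filterlim_compose[OF q_lim fu])
  have Q2: "(\<lambda>m. q (- u m)) \<longlonglongrightarrow> 1" unfolding q_def by (rule filterlim_compose[OF q_lim fu'])
  have eq: "(real (Suc m))\<^sup>2 * (exp (x / real (Suc m)) + exp (- x / real (Suc m)) - 2)
      = (x\<^sup>2 / 4) * (q (u m) + q (- u m))\<^sup>2" for m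
  proof -
    have u0: "u m \<noteq> 0" unfolding u_def using False by simp
    have e1: "u m * (q (u m) + q (- u m)) = exp (u m) - exp (- u m)"
      unfolding q_def using u0 by (simp add: field_simps)
    have e2: "exp (x / real (Suc m)) + exp (- x / real (Suc m)) - 2 = (exp (u m) - exp (- u m))\<^sup>2"
    proof -
      have "x / real (Suc m) = 2 * u m" unfolding u_def by (simp add: field_simps)
      then show ?thesis by (simp add: power2_eq_square algebra_simps exp_add[symmetric] mult_exp_exp)
    qed
    have "(real (Suc m))\<^sup>2 * (u m)\<^sup>2 = x\<^sup>2 / 4" unfolding u_def by (rule aux_r1) simp
    then show ?thesis unfolding e2 e1[symmetric] by (simp add: power_mult_distrib mult_ac)
  qed
  have "(\<lambda>m. (x\<^sup>2 / 4) * (q (u m) + q (- u m))\<^sup>2) \<longlonglongrightarrow> (x\<^sup>2 / 4) * (1 + 1)\<^sup>2"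
    by (intro tendsto_intros Q1 Q2)
  then show ?thesis unfolding eq by simp
qed

lemma Eh_lim:
  assumes c: "0 \<le> (c::real)"
  shows "(\<lambda>m. (real (Suc m))\<^sup>2 * (2 * exp (c / (2 * (real (Suc m))\<^sup>2)) - 2)) \<longlonglongrightarrow> c"
proof (cases "c = 0")
  case True then show ?thesis by simp
next
  case False
  define q where "q y = (exp y - 1) / y" for y :: real
  define v where "v m = (c/2) * inverse (real (Suc m)) * inverse (real (Suc m))" for m
  have fv: "filterlim v (at 0) sequentially"
    unfolding filterlim_at
  proof
    show "\<forall>\<^sub>F m in sequentially. v m \<in> UNIV \<and> v m \<noteq> 0" using False unfolding v_def by simp
    show "(v \<longlongrightarrow> 0) sequentially" unfolding v_def
      using tendsto_mult[OF tendsto_mult_right_zero[OF LIMSEQ_inverse_real_of_nat] LIMSEQ_inverse_real_of_nat, of "c/2"]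
      by simp
  qed
  have Q: "(\<lambda>m. q (v m)) \<longlonglongrightarrow> 1" unfolding q_def by (rule filterlim_compose[OF q_lim fv])
  have eq: "(real (Suc m))\<^sup>2 * (2 * exp (c / (2 * (real (Suc m))\<^sup>2)) - 2) = c * q (v m)" for m
  proof -
    have v0: "v m \<noteq> 0" unfolding v_def using False by simp
    have "c / (2 * (real (Suc m))\<^sup>2) = v m" unfolding v_def by (rule aux_r3) simp
    moreover have "(real (Suc m))\<^sup>2 * v m = c / 2" unfolding v_def by (rule aux_r2) simp
    ultimately show ?thesis unfolding q_def using v0 by (simp add: field_simps)
  qed
  show ?thesis unfolding eq using tendsto_mult[OF tendsto_const Q, of c] by simp
qed


lemma mgf_moments:
  fixes P :: "'b measure" and Z :: "'b \<Rightarrow> real"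
  assumes P: "prob_space P" and Zm: "Z \<in> borel_measurable P"
    and mgf: "\<And>a. (\<integral>\<^sup>+x. ennreal (exp (a * Z x)) \<partial>P) = ennreal (exp (a\<^sup>2 * c / 2))"
    and c: "0 \<le> c"
  shows "integrable P (\<lambda>x. (Z x)\<^sup>2)" "(\<integral>x. (Z x)\<^sup>2 \<partial>P) = c" "integrable P (\<lambda>x. (Z x)^4)"
proof -
  have iE: "integrable P (\<lambda>x. exp (a * Z x))" for a
    by (rule integrableI_nn_integral_finite[OF _ _ mgf]) (use Zm in auto)
  have vE: "(\<integral>x. exp (a * Z x) \<partial>P) = exp (a\<^sup>2 * c / 2)" for a
  proof -
    have "ennreal (\<integral>x. exp (a * Z x) \<partial>P) = ennreal (exp (a\<^sup>2 * c / 2))"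
      using nn_integral_eq_integral[OF iE, of a] mgf[of a] by simp
    then show ?thesis by (simp add: ennreal_inj integral_nonneg_AE)
  qed
  define W where "W x = 4 * (exp (2 * Z x) + exp (-2 * Z x))" for x
  have iW: "integrable P W" unfolding W_def by (intro integrable_mult_right Bochner_Integration.integrable_add iE)
  have mW: "W \<in> borel_measurable P" unfolding W_def using Zm by measurable
  have iE1: "integrable P (\<lambda>x. 4 * (exp (1 * Z x) + exp (-1 * Z x)))"
    by (intro integrable_mult_right Bochner_Integration.integrable_add iE)
  show i2: "integrable P (\<lambda>x. (Z x)\<^sup>2)"
  proof (rule Bochner_Integration.integrable_bound[OF iE1])
    show "(\<lambda>x. (Z x)\<^sup>2) \<in> borel_measurable P" using Zm by measurable
    show "AE x in P. norm ((Z x)\<^sup>2) \<le> norm (4 * (exp (1 * Z x) + exp (-1 * Z x)))"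
    proof (rule AE_I2)
      fix x
      have "(Z x)\<^sup>2 \<le> 4 * exp \<bar>Z x\<bar>" by (rule exp_sq_bound)
      also have "\<dots> \<le> 4 * (exp (Z x) + exp (- Z x))" using exp_abs_le[of "Z x"] by simp
      finally show "norm ((Z x)\<^sup>2) \<le> norm (4 * (exp (1 * Z x) + exp (-1 * Z x)))"
        by (simp add: abs_of_nonneg add_nonneg_nonneg)
    qed
  qed
  have sqb: "(Z x)\<^sup>2 * exp \<bar>Z x\<bar> \<le> W x" for x
  proof -
    have "(Z x)\<^sup>2 * exp \<bar>Z x\<bar> \<le> (4 * exp \<bar>Z x\<bar>) * exp \<bar>Z x\<bar>"
      by (intro mult_right_mono exp_sq_bound) auto
    also have "\<dots> = 4 * exp \<bar>2 * Z x\<bar>" by (simp add: exp_add[symmetric] abs_mult)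
    also have "\<dots> \<le> W x" unfolding W_def using exp_abs_le[of "2 * Z x"] by simp
    finally show ?thesis .
  qed
  show "integrable P (\<lambda>x. (Z x)^4)"
  proof (rule Bochner_Integration.integrable_bound[of _ "\<lambda>x. 4 * W x"])
    show "integrable P (\<lambda>x. 4 * W x)" using iW by auto
    show "(\<lambda>x. (Z x)^4) \<in> borel_measurable P" using Zm by measurable
    show "AE x in P. norm ((Z x)^4) \<le> norm (4 * W x)"
    proof (rule AE_I2)
      fix x
      have "(Z x)^4 = (Z x)\<^sup>2 * (Z x)\<^sup>2" by (simp add: power2_eq_square power4_eq_xxxx)
      also have "\<dots> \<le> (4 * exp \<bar>Z x\<bar>) * (Z x)\<^sup>2" by (intro mult_right_mono exp_sq_bound) auto
      also have "\<dots> = 4 * ((Z x)\<^sup>2 * exp \<bar>Z x\<bar>)" by simp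
      also have "\<dots> \<le> 4 * W x" using sqb[of x] by simp
      finally have "(Z x)^4 \<le> 4 * W x" .
      moreover have "0 \<le> W x" unfolding W_def by simp
      ultimately show "norm ((Z x)^4) \<le> norm (4 * W x)" by (simp add: abs_of_nonneg zero_le_even_power)
    qed
  qed
  define s where "s m x = (real (Suc m))\<^sup>2 * (exp (Z x / real (Suc m)) + exp (- Z x / real (Suc m)) - 2)" for m x
  have lim1: "(\<lambda>m. \<integral>x. s m x \<partial>P) \<longlonglongrightarrow> (\<integral>x. (Z x)\<^sup>2 \<partial>P)"
  proof (rule integral_dominated_convergence[OF _ _ iW])
    show "(\<lambda>x. (Z x)\<^sup>2) \<in> borel_measurable P" using Zm by measurable
    show "s m \<in> borel_measurable P" for m unfolding s_def using Zm by measurable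
    show "AE x in P. (\<lambda>m. s m x) \<longlonglongrightarrow> (Z x)\<^sup>2" unfolding s_def by (intro AE_I2 h_lim)
    show "AE x in P. norm (s m x) \<le> W x" for m
    proof (rule AE_I2)
      fix x
      have "1 \<le> real (Suc m)" by simp
      note hb = h_bounds[OF this, of "Z x"]
      have "norm (s m x) = s m x" unfolding s_def using hb(1) by simp
      also have "\<dots> \<le> (Z x)\<^sup>2 * exp \<bar>Z x\<bar>" unfolding s_def using hb(2) by simp
      also have "\<dots> \<le> W x" by (rule sqb)
      finally show "norm (s m x) \<le> W x" .
    qed
  qed
  have ev: "(\<integral>x. s m x \<partial>P) = (real (Suc m))\<^sup>2 * (2 * exp (c / (2 * (real (Suc m))\<^sup>2)) - 2)" for m
  proof -
    define r where "r = real (Suc m)"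
    have r: "r \<noteq> 0" unfolding r_def by simp
    have a1: "(\<integral>x. exp (Z x / r) \<partial>P) = exp (c / (2 * r\<^sup>2))"
      using vE[of "1/r"] r by (simp add: power_divide field_simps)
    have a2: "(\<integral>x. exp (- Z x / r) \<partial>P) = exp (c / (2 * r\<^sup>2))"
      using vE[of "-1/r"] r by (simp add: power_divide field_simps)
    have i1: "integrable P (\<lambda>x. exp (Z x / r))" using iE[of "1/r"] by simp
    have i2: "integrable P (\<lambda>x. exp (- Z x / r))" using iE[of "-1/r"] by simp
    have fm: "finite_measure P" using P by (simp add: prob_space_def)
    have ic: "integrable P (\<lambda>x. 2::real)" by (rule finite_measure.integrable_const[OF fm])
    have "(\<integral>x. exp (Z x / r) + exp (- Z x / r) - 2 \<partial>P) = (\<integral>x. exp (Z x / r) + exp (- Z x / r) \<partial>P) - (\<integral>x. 2 \<partial>P)"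
      by (rule Bochner_Integration.integral_diff[OF Bochner_Integration.integrable_add[OF i1 i2] ic])
    also have "(\<integral>x. exp (Z x / r) + exp (- Z x / r) \<partial>P) = (\<integral>x. exp (Z x / r) \<partial>P) + (\<integral>x. exp (- Z x / r) \<partial>P)"
      by (rule Bochner_Integration.integral_add[OF i1 i2])
    also have "(\<integral>x. 2 \<partial>P) = (2::real)" using prob_space.prob_space[OF P] by simp
    finally have "(\<integral>x. exp (Z x / r) + exp (- Z x / r) - 2 \<partial>P) = (\<integral>x. exp (Z x / r) \<partial>P) + (\<integral>x. exp (- Z x / r) \<partial>P) - 2" .
    then have e3: "(\<integral>x. s m x \<partial>P) = r\<^sup>2 * ((\<integral>x. exp (Z x / r) \<partial>P) + (\<integral>x. exp (- Z x / r) \<partial>P) - 2)"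
      unfolding s_def r_def[symmetric] by simp
    show ?thesis unfolding e3 a1 a2 unfolding r_def by simp
  qed
  have lim2: "(\<lambda>m. \<integral>x. s m x \<partial>P) \<longlonglongrightarrow> c" unfolding ev by (rule Eh_lim[OF c])
  show "(\<integral>x. (Z x)\<^sup>2 \<partial>P) = c" using LIMSEQ_unique[OF lim1 lim2] .
qed


lemma pos_def_invertible:
  assumes "pos_def (A::real^'n^'n)"
  shows "invertible A"
proof -
  have "inj ((*v) A)"
  proof (rule injI)
    fix x y assume e: "A *v x = A *v y"
    have "A *v (x - y) = 0" using e by (simp add: mv_bb[THEN bounded_bilinear.diff_right])
    then have "(x - y) \<bullet> (A *v (x - y)) = 0" by simp
    then show "x = y" using assms unfolding pos_def_def by (metis less_irrefl eq_iff_diff_eq_0)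
  qed
  moreover have "linear ((*v) A)" by (rule matrix_vector_mul_linear)
  ultimately have "bij ((*v) A)" using linear_injective_imp_surjective bij_def by blast
  then show ?thesis by (simp add: invertible_eq_bij)
qed

lemma inv_sym:
  assumes "symmetric_mat (A::real^'n^'n)" "invertible A"
  shows "symmetric_mat (matrix_inv A)"
proof -
  define Q where "Q = matrix_inv A"
  have AQ: "A ** Q = mat 1" and QA: "Q ** A = mat 1" unfolding Q_def using matrix_inv_props[OF assms(2)] by auto
  have "transpose Q ** A = mat 1"
    using arg_cong[OF AQ, of transpose] assms(1) by (simp add: matrix_transpose_mul transpose_mat symmetric_mat_def)
  then have "transpose Q = transpose Q ** (A ** Q)" using AQ by simp
  also have "\<dots> = Q" using \<open>transpose Q ** A = mat 1\<close> by (metis matrix_mul_assoc matrix_mul_lid)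
  finally show ?thesis unfolding Q_def symmetric_mat_def .
qed

lemma mvn_density_meas:
  fixes Sig :: "real^'p^'p"
  shows "mvn_density Sig \<in> borel_measurable borel"
proof -
  have "continuous_on UNIV (\<lambda>x::real^'p. exp (- (x \<bullet> (matrix_inv Sig *v x)) / 2))"
    by (intro continuous_intros linear_continuous_on bounded_bilinear.bounded_linear_right[OF mv_bb]) auto
  then have "(\<lambda>x::real^'p. exp (- (x \<bullet> (matrix_inv Sig *v x)) / 2)) \<in> borel_measurable borel"
    by (rule borel_measurable_continuous_onI)
  then show ?thesis unfolding mvn_density_def[abs_def] by measurable
qed

declare mvn_density_meas[measurable]

lemma mvn_mgf:
  fixes Sig :: "real^'p^'p"
  assumes Sig: "pos_def Sig" and norm1: "(\<integral>\<^sup>+x. ennreal (mvn_density Sig x) \<partial>lborel) = 1"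
  shows "(\<integral>\<^sup>+x. ennreal (mvn_density Sig x) * ennreal (exp (a * (w \<bullet> x))) \<partial>lborel)
           = ennreal (exp (a\<^sup>2 * (w \<bullet> (Sig *v w)) / 2))"
proof -
  define Q where "Q = matrix_inv Sig"
  have sS: "symmetric_mat Sig" using Sig pos_def_def by auto
  have inv: "invertible Sig" by (rule pos_def_invertible[OF Sig])
  have SQ: "Sig ** Q = mat 1" unfolding Q_def using matrix_inv_props[OF inv] by auto
  have QS: "Q ** Sig = mat 1" unfolding Q_def using matrix_inv_props[OF inv] by auto
  have sQ: "symmetric_mat Q" unfolding Q_def by (rule inv_sym[OF sS inv])
  define c where "c = w \<bullet> (Sig *v w)"
  define v where "v = (-a) *\<^sub>R (Sig *v w)"
  define Z0 where "Z0 = sqrt ((2 * pi) ^ CARD('p) * det Sig)"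
  have phi: "mvn_density Sig y = exp (- (y \<bullet> (Q *v y)) / 2) / Z0" for y
    unfolding mvn_density_def Q_def Z0_def ..
  have Z0: "Z0 > 0"
  proof (rule ccontr)
    assume "\<not> Z0 > 0"
    then have "mvn_density Sig x \<le> 0" for x unfolding phi by (simp add: divide_nonneg_nonpos)
    then have "(\<lambda>x. ennreal (mvn_density Sig x)) = (\<lambda>x. 0)" by (simp add: ennreal_neg)
    then have "(\<integral>\<^sup>+x. ennreal (mvn_density Sig x) \<partial>lborel) = 0" by simp
    then show False using norm1 by simp
  qed
  have q: "(x + v) \<bullet> (Q *v (x + v)) = x \<bullet> (Q *v x) - 2 * a * (w \<bullet> x) + a\<^sup>2 * c" for x
  proof -
    have vQx: "v \<bullet> (Q *v x) = - a * (w \<bullet> x)"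
    proof -
      have "(Sig *v w) \<bullet> (Q *v x) = w \<bullet> (Sig *v (Q *v x))" using sym_inner[OF sS, of w "Q *v x"] by simp
      also have "\<dots> = w \<bullet> x" by (simp add: matrix_vector_mul_assoc SQ)
      finally show ?thesis unfolding v_def by simp
    qed
    have xQv: "x \<bullet> (Q *v v) = v \<bullet> (Q *v x)" using sym_inner[OF sQ, of x v] by (simp add: inner_commute)
    have vQv: "v \<bullet> (Q *v v) = a\<^sup>2 * c"
    proof -
      have "Q *v (Sig *v w) = w" by (simp add: matrix_vector_mul_assoc QS)
      then have "(Sig *v w) \<bullet> (Q *v (Sig *v w)) = (Sig *v w) \<bullet> w" by simp
      then show ?thesis unfolding v_def c_def
        by (simp add: matrix_vector_mult_scaleR power2_eq_square inner_commute mv_bb[THEN bounded_bilinear.minus_right])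
    qed
    show ?thesis using vQx xQv vQv
      by (simp add: matrix_vector_right_distrib inner_add_left inner_add_right)
  qed
  have pt: "mvn_density Sig (v + x) = mvn_density Sig x * exp (a * (w \<bullet> x)) * exp (- (a\<^sup>2 * c) / 2)" for x
  proof -
    have "mvn_density Sig (v + x) = exp (- (x \<bullet> (Q *v x)) / 2 + a * (w \<bullet> x) - a\<^sup>2 * c / 2) / Z0"
      unfolding phi using q[of x] by (simp add: add.commute field_simps)
    also have "\<dots> = mvn_density Sig x * exp (a * (w \<bullet> x)) * exp (- (a\<^sup>2 * c) / 2)"
    proof -
      have "exp (- (x \<bullet> (Q *v x)) / 2 + a * (w \<bullet> x) - a\<^sup>2 * c / 2) = exp (- (x \<bullet> (Q *v x)) / 2) * exp (a * (w \<bullet> x)) * exp (- (a\<^sup>2 * c) / 2)"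
        by (simp add: mult_exp_exp algebra_simps)
      then show ?thesis unfolding phi by simp
    qed
    finally show ?thesis .
  qed
  have tr: "(\<integral>\<^sup>+x. ennreal (mvn_density Sig (v + x)) \<partial>lborel) = 1"
  proof -
    have "(\<integral>\<^sup>+x. ennreal (mvn_density Sig (v + x)) \<partial>lborel)
        = (\<integral>\<^sup>+x. ennreal (mvn_density Sig x) \<partial>distr lborel borel ((+) v))"
      using mvn_density_meas[of Sig] by (intro nn_integral_distr[symmetric]) auto
    also have "\<dots> = 1" unfolding lborel_distr_plus by (rule norm1)
    finally show ?thesis .
  qed
  have "(\<integral>\<^sup>+x. ennreal (mvn_density Sig (v + x)) \<partial>lborel)
      = (\<integral>\<^sup>+x. ennreal (exp (- (a\<^sup>2 * c) / 2)) * (ennreal (mvn_density Sig x) * ennreal (exp (a * (w \<bullet> x)))) \<partial>lborel)"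
  proof (rule nn_integral_cong)
    fix x
    have "0 \<le> mvn_density Sig x" unfolding phi using Z0 by simp
    then show "ennreal (mvn_density Sig (v + x)) = ennreal (exp (- (a\<^sup>2 * c) / 2)) * (ennreal (mvn_density Sig x) * ennreal (exp (a * (w \<bullet> x))))"
      unfolding pt by (simp add: ennreal_mult'[symmetric] mult_ac)
  qed
  also have "\<dots> = ennreal (exp (- (a\<^sup>2 * c) / 2)) * (\<integral>\<^sup>+x. ennreal (mvn_density Sig x) * ennreal (exp (a * (w \<bullet> x))) \<partial>lborel)"
    by (rule nn_integral_cmult) measurable
  finally have "ennreal (exp (- (a\<^sup>2 * c) / 2)) * (\<integral>\<^sup>+x. ennreal (mvn_density Sig x) * ennreal (exp (a * (w \<bullet> x))) \<partial>lborel) = 1"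
    using tr by simp
  then have "ennreal (exp (a\<^sup>2 * c / 2)) * (ennreal (exp (- (a\<^sup>2 * c) / 2)) * (\<integral>\<^sup>+x. ennreal (mvn_density Sig x) * ennreal (exp (a * (w \<bullet> x))) \<partial>lborel)) = ennreal (exp (a\<^sup>2 * c / 2))"
    by simp
  moreover have "ennreal (exp (a\<^sup>2 * c / 2)) * ennreal (exp (- (a\<^sup>2 * c) / 2)) = 1"
    by (simp add: ennreal_mult'[symmetric] exp_add[symmetric])
  ultimately show ?thesis unfolding c_def by (simp add: mult.assoc[symmetric])
qed


lemma axis_qf: "axis j 1 \<bullet> ((A::real^'n^'n) *v axis k 1) = A $ j $ k"
  by (simp add: inner_axis' matrix_vector_mult_basis column_def)

lemma mvn_moments:
  fixes X :: "'a \<Rightarrow> real^'p" and Sig :: "real^'p^'p"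
  assumes M: "prob_space M" and Sig: "pos_def Sig"
    and D: "distributed M lborel X (\<lambda>x. ennreal (mvn_density Sig x))"
  shows "integrable M (\<lambda>w. X w $ j * X w $ k)" "(\<integral>w. X w $ j * X w $ k \<partial>M) = Sig $ j $ k"
    "integrable M (\<lambda>w. (X w $ j * X w $ k)\<^sup>2)"
proof -
  have Xm: "X \<in> borel_measurable M" using distributed_measurable[OF D] by (simp add: measurable_lborel2)
  have norm1: "(\<integral>\<^sup>+x. ennreal (mvn_density Sig x) \<partial>lborel) = 1"
  proof -
    have "(\<integral>\<^sup>+x. ennreal (mvn_density Sig x) * 1 \<partial>lborel) = (\<integral>\<^sup>+x. 1 \<partial>M)"
      by (rule distributed_nn_integral[OF D]) simp
    also have "\<dots> = 1" using prob_space.emeasure_space_1[OF M] by simp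
    finally show ?thesis by simp
  qed
  have sS: "symmetric_mat Sig" using Sig pos_def_def by auto
  have mom: "integrable M (\<lambda>x. (v \<bullet> X x)\<^sup>2) \<and> (\<integral>x. (v \<bullet> X x)\<^sup>2 \<partial>M) = v \<bullet> (Sig *v v)
      \<and> integrable M (\<lambda>x. (v \<bullet> X x)^4)" for v
  proof -
    have c: "0 \<le> v \<bullet> (Sig *v v)" using Sig unfolding pos_def_def by (cases "v = 0") (auto simp: less_imp_le)
    have mgf: "(\<integral>\<^sup>+x. ennreal (exp (a * (v \<bullet> X x))) \<partial>M) = ennreal (exp (a\<^sup>2 * (v \<bullet> (Sig *v v)) / 2))" for a
    proof -
      have "(\<integral>\<^sup>+x. ennreal (mvn_density Sig x) * ennreal (exp (a * (v \<bullet> x))) \<partial>lborel)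
          = (\<integral>\<^sup>+x. ennreal (exp (a * (v \<bullet> X x))) \<partial>M)"
        by (rule distributed_nn_integral[OF D]) measurable
      then show ?thesis using mvn_mgf[OF Sig norm1, of a v] by simp
    qed
    have Zm: "(\<lambda>x. v \<bullet> X x) \<in> borel_measurable M" using Xm by measurable
    show ?thesis using mgf_moments[OF M Zm mgf c] by blast
  qed
  define ep where "ep = axis j 1 + axis k (1::real)"
  define em where "em = axis j 1 - axis k (1::real)"
  have ipx: "ep \<bullet> x = x $ j + x $ k" "em \<bullet> x = x $ j - x $ k" for x :: "real^'p"
    unfolding ep_def em_def by (simp_all add: inner_add_left inner_diff_left inner_axis')
  have prod: "X w $ j * X w $ k = ((ep \<bullet> X w)\<^sup>2 - (em \<bullet> X w)\<^sup>2) / 4" for w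
    unfolding ipx by (simp add: power2_eq_square algebra_simps)
  have cpm: "ep \<bullet> (Sig *v ep) - em \<bullet> (Sig *v em) = 4 * Sig $ j $ k"
  proof -
    have "Sig $ k $ j = Sig $ j $ k" using sS unfolding symmetric_mat_iff by simp
    then show ?thesis unfolding ep_def em_def
      by (simp add: matrix_vector_right_distrib mv_bb[THEN bounded_bilinear.diff_right]
          inner_add_left inner_add_right inner_diff_left inner_diff_right axis_qf)
  qed
  note mp = mom[of ep] and mm = mom[of em]
  show i1: "integrable M (\<lambda>w. X w $ j * X w $ k)"
    unfolding prod using mp mm by (intro integrable_divide Bochner_Integration.integrable_diff) auto
  have "(\<integral>w. X w $ j * X w $ k \<partial>M) = ((\<integral>w. (ep \<bullet> X w)\<^sup>2 \<partial>M) - (\<integral>w. (em \<bullet> X w)\<^sup>2 \<partial>M)) / 4"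
    unfolding prod using mp mm by (simp add: Bochner_Integration.integral_diff)
  also have "\<dots> = Sig $ j $ k" using mp mm cpm by simp
  finally show "(\<integral>w. X w $ j * X w $ k \<partial>M) = Sig $ j $ k" .
  have f4: "integrable M (\<lambda>w. (X w $ i)^4)" for i
    using mom[of "axis i 1"] by (simp add: inner_axis')
  show "integrable M (\<lambda>w. (X w $ j * X w $ k)\<^sup>2)"
  proof (rule Bochner_Integration.integrable_bound[of _ "\<lambda>w. (X w $ j)^4 + (X w $ k)^4"])
    show "integrable M (\<lambda>w. (X w $ j)^4 + (X w $ k)^4)" using f4 by auto
    show "(\<lambda>w. (X w $ j * X w $ k)\<^sup>2) \<in> borel_measurable M" using Xm by measurable
    show "AE w in M. norm ((X w $ j * X w $ k)\<^sup>2) \<le> norm ((X w $ j)^4 + (X w $ k)^4)"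
    proof (rule AE_I2)
      fix w
      define a where "a = (X w $ j)\<^sup>2"
      define b where "b = (X w $ k)\<^sup>2"
      have ab0: "0 \<le> a * b" unfolding a_def b_def by simp
      have "0 \<le> (a - b)\<^sup>2" by simp
      moreover have "(a - b)\<^sup>2 = a\<^sup>2 - 2 * (a * b) + b\<^sup>2" by (simp add: power2_eq_square algebra_simps)
      ultimately have "a * b \<le> a\<^sup>2 + b\<^sup>2" using ab0 by linarith
      moreover have "(X w $ j * X w $ k)\<^sup>2 = a * b" unfolding a_def b_def by (simp add: power_mult_distrib)
      moreover have "(X w $ j)^4 + (X w $ k)^4 = a\<^sup>2 + b\<^sup>2" unfolding a_def b_def by simp
      moreover have "0 \<le> a * b" unfolding a_def b_def by simp
      ultimately show "norm ((X w $ j * X w $ k)\<^sup>2) \<le> norm ((X w $ j)^4 + (X w $ k)^4)"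
        by (simp add: add_nonneg_nonneg)
    qed
  qed
qed




lemma sample_cov_entry: "sample_cov Y n w $ j $ k = (1 / real n) * (\<Sum>i<n. Y i w $ j * Y i w $ k)"
  unfolding sample_cov_def outer_def by (simp add: sum_component)

locale gauss_setup =
  fixes M :: "'a measure" and Sig :: "real^'p^'p" and Y :: "nat \<Rightarrow> 'a \<Rightarrow> real^'p"
  assumes M: "prob_space M" and Sig: "pos_def Sig"
    and indep: "prob_space.indep_vars M (\<lambda>_. borel) Y UNIV"
    and distr: "\<And>i. distributed M lborel (Y i) (\<lambda>x. ennreal (mvn_density Sig x))"
begin

lemma Ym: "Y i \<in> borel_measurable M"
  using distributed_measurable[OF distr] by (simp add: measurable_lborel2)

lemma same_int:
  fixes g :: "real^'p \<Rightarrow> real"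
  assumes g: "g \<in> borel_measurable borel"
  shows "(\<integral>w. g (Y i w) \<partial>M) = (\<integral>w. g (Y 0 w) \<partial>M)"
proof -
  have d: "distr M lborel (Y i) = distr M lborel (Y 0)"
    using distributed_distr_eq_density[OF distr[of i]] distributed_distr_eq_density[OF distr[of 0]] by simp
  have gl: "g \<in> borel_measurable lborel" using g by (simp add: measurable_lborel1)
  have "(\<integral>w. g (Y i w) \<partial>M) = (\<integral>x. g x \<partial>distr M lborel (Y i))"
    using integral_distr[OF distributed_measurable[OF distr] gl] by simp
  also have "\<dots> = (\<integral>x. g x \<partial>distr M lborel (Y 0))" unfolding d ..
  also have "\<dots> = (\<integral>w. g (Y 0 w) \<partial>M)"
    using integral_distr[OF distributed_measurable[OF distr] gl] by simp
  finally show ?thesis .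
qed

definition Xc :: "'p \<Rightarrow> 'p \<Rightarrow> nat \<Rightarrow> 'a \<Rightarrow> real" where
  "Xc j k i w = Y i w $ j * Y i w $ k - Sig $ j $ k"

lemma Xc_meas: "Xc j k i \<in> borel_measurable M"
  unfolding Xc_def using Ym by measurable

lemma Xc_int: "integrable M (Xc j k i)" and Xc_mean: "(\<integral>w. Xc j k i w \<partial>M) = 0"
  and Xc_sq_int: "integrable M (\<lambda>w. (Xc j k i w)\<^sup>2)"
proof -
  note mo = mvn_moments[OF M Sig distr[of i], of j k]
  have fm: "finite_measure M" using M by (simp add: prob_space_def)
  have ic: "integrable M (\<lambda>w. Sig $ j $ k)" by (rule finite_measure.integrable_const[OF fm])
  show i: "integrable M (Xc j k i)" unfolding Xc_def using mo(1) ic by auto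
  show "(\<integral>w. Xc j k i w \<partial>M) = 0" unfolding Xc_def
    using mo(1,2) ic prob_space.prob_space[OF M] by (simp add: Bochner_Integration.integral_diff)
  have "(\<lambda>w. (Xc j k i w)\<^sup>2) = (\<lambda>w. (Y i w $ j * Y i w $ k)\<^sup>2 - 2 * Sig $ j $ k * (Y i w $ j * Y i w $ k) + (Sig $ j $ k)\<^sup>2)"
    unfolding Xc_def by (simp add: power2_eq_square algebra_simps)
  moreover have "integrable M \<dots>"
    by (intro Bochner_Integration.integrable_add Bochner_Integration.integrable_diff integrable_mult_right
        mo(1) mo(3) finite_measure.integrable_const[OF fm])
  ultimately show "integrable M (\<lambda>w. (Xc j k i w)\<^sup>2)" by simp
qed

lemma Xc_sq_same: "(\<integral>w. (Xc j k i w)\<^sup>2 \<partial>M) = (\<integral>w. (Xc j k 0 w)\<^sup>2 \<partial>M)"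
  unfolding Xc_def by (rule same_int[of "\<lambda>x. (x $ j * x $ k - Sig $ j $ k)\<^sup>2"]) measurable

lemma Xc_prod_int: "integrable M (\<lambda>w. Xc j k i w * Xc j k l w)"
proof (rule Bochner_Integration.integrable_bound[of _ "\<lambda>w. (Xc j k i w)\<^sup>2 + (Xc j k l w)\<^sup>2"])
  show "integrable M (\<lambda>w. (Xc j k i w)\<^sup>2 + (Xc j k l w)\<^sup>2)" using Xc_sq_int by auto
  show "(\<lambda>w. Xc j k i w * Xc j k l w) \<in> borel_measurable M" using Xc_meas by measurable
  show "AE w in M. norm (Xc j k i w * Xc j k l w) \<le> norm ((Xc j k i w)\<^sup>2 + (Xc j k l w)\<^sup>2)"
  proof (rule AE_I2)
    fix w
    define a where "a = Xc j k i w"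
    define b where "b = Xc j k l w"
    have "0 \<le> (\<bar>a\<bar> - \<bar>b\<bar>)\<^sup>2" by simp
    moreover have "(\<bar>a\<bar> - \<bar>b\<bar>)\<^sup>2 = a\<^sup>2 - 2 * (\<bar>a\<bar> * \<bar>b\<bar>) + b\<^sup>2"
      by (simp add: power2_eq_square algebra_simps)
    moreover have "0 \<le> \<bar>a\<bar> * \<bar>b\<bar>" by simp
    ultimately have "\<bar>a * b\<bar> \<le> a\<^sup>2 + b\<^sup>2" unfolding abs_mult by linarith
    then show "norm (Xc j k i w * Xc j k l w) \<le> norm ((Xc j k i w)\<^sup>2 + (Xc j k l w)\<^sup>2)"
      unfolding a_def b_def by simp
  qed
qed

lemma Xc_cross: "i \<noteq> l \<Longrightarrow> (\<integral>w. Xc j k i w * Xc j k l w \<partial>M) = 0"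
proof -
  assume il: "i \<noteq> l"
  have ind: "prob_space.indep_vars M (\<lambda>_. borel) (\<lambda>m w. Xc j k m w) {i, l}"
  proof -
    have "prob_space.indep_vars M (\<lambda>_. borel) (\<lambda>m w. (\<lambda>x. x $ j * x $ k - Sig $ j $ k) (Y m w)) UNIV"
      by (rule prob_space.indep_vars_compose2[OF M indep]) measurable
    then have "prob_space.indep_vars M (\<lambda>_. borel) (\<lambda>m w. Xc j k m w) UNIV" unfolding Xc_def .
    then show ?thesis by (rule prob_space.indep_vars_subset[OF M]) auto
  qed
  have "(\<integral>w. (\<Prod>m\<in>{i,l}. Xc j k m w) \<partial>M) = (\<Prod>m\<in>{i,l}. (\<integral>w. Xc j k m w \<partial>M))"
    by (rule prob_space.indep_vars_lebesgue_integral[OF M _ ind]) (auto intro: Xc_int)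
  then show ?thesis using il by (simp add: Xc_mean)
qed

lemma sum_sq:
  "(\<integral>w. (\<Sum>i<n. Xc j k i w)\<^sup>2 \<partial>M) = real n * (\<integral>w. (Xc j k 0 w)\<^sup>2 \<partial>M)"
  "integrable M (\<lambda>w. (\<Sum>i<n. Xc j k i w)\<^sup>2)"
proof -
  have eq: "(\<lambda>w. (\<Sum>i<n. Xc j k i w)\<^sup>2) = (\<lambda>w. \<Sum>i<n. \<Sum>l<n. Xc j k i w * Xc j k l w)"
    by (simp add: power2_eq_square sum_product)
  show "integrable M (\<lambda>w. (\<Sum>i<n. Xc j k i w)\<^sup>2)" unfolding eq
    by (intro Bochner_Integration.integrable_sum Xc_prod_int)
  have "(\<integral>w. (\<Sum>i<n. Xc j k i w)\<^sup>2 \<partial>M) = (\<Sum>i<n. \<Sum>l<n. (\<integral>w. Xc j k i w * Xc j k l w \<partial>M))"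
    unfolding eq
    by (simp add: Bochner_Integration.integral_sum Bochner_Integration.integrable_sum Xc_prod_int)
  also have "\<dots> = (\<Sum>i<n. (\<integral>w. (Xc j k i w)\<^sup>2 \<partial>M))"
  proof (rule sum.cong[OF refl])
    fix i assume i: "i \<in> {..<n}"
    have "(\<Sum>l<n. (\<integral>w. Xc j k i w * Xc j k l w \<partial>M)) = (\<Sum>l\<in>{i}. (\<integral>w. Xc j k i w * Xc j k l w \<partial>M))"
      by (rule sum.mono_neutral_right) (use i Xc_cross in auto)
    then show "(\<Sum>l<n. (\<integral>w. Xc j k i w * Xc j k l w \<partial>M)) = (\<integral>w. (Xc j k i w)\<^sup>2 \<partial>M)"
      by (simp add: power2_eq_square)
  qed
  also have "\<dots> = (\<Sum>i<n. (\<integral>w. (Xc j k 0 w)\<^sup>2 \<partial>M))" by (rule sum.cong[OF refl]) (rule Xc_sq_same)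
  also have "\<dots> = real n * (\<integral>w. (Xc j k 0 w)\<^sup>2 \<partial>M)" by simp
  finally show "(\<integral>w. (\<Sum>i<n. Xc j k i w)\<^sup>2 \<partial>M) = real n * (\<integral>w. (Xc j k 0 w)\<^sup>2 \<partial>M)" .
qed

lemma entry_dev: "n \<ge> 1 \<Longrightarrow> sample_cov Y n w $ j $ k - Sig $ j $ k = (1 / real n) * (\<Sum>i<n. Xc j k i w)"
  unfolding sample_cov_entry Xc_def by (simp add: sum_subtractf field_simps)

definition Vc :: real where "Vc = (\<Sum>j\<in>UNIV. \<Sum>k\<in>UNIV. (\<integral>w. (Xc j k 0 w)\<^sup>2 \<partial>M))"

lemma wlln:
  "integrable M (\<lambda>w. (norm (sample_cov Y n w - Sig))\<^sup>2)"
  "n \<ge> 1 \<Longrightarrow> (\<integral>w. (norm (sample_cov Y n w - Sig))\<^sup>2 \<partial>M) = Vc / real n"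
proof -
  have eq: "(norm (sample_cov Y n w - Sig))\<^sup>2 = (\<Sum>j\<in>UNIV. \<Sum>k\<in>UNIV. (sample_cov Y n w $ j $ k - Sig $ j $ k)\<^sup>2)" for w
    by (simp add: norm_sq_mat)
  have ient: "integrable M (\<lambda>w. (sample_cov Y n w $ j $ k - Sig $ j $ k)\<^sup>2)" for j k
  proof (cases "n = 0")
    case True
    have fm: "finite_measure M" using M by (simp add: prob_space_def)
    show ?thesis using True finite_measure.integrable_const[OF fm] by (simp add: sample_cov_def)
  next
    case False
    then have "(\<lambda>w. (sample_cov Y n w $ j $ k - Sig $ j $ k)\<^sup>2) = (\<lambda>w. (1 / real n)\<^sup>2 * (\<Sum>i<n. Xc j k i w)\<^sup>2)"
      using entry_dev[of n] by (simp add: power_divide)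
    then show ?thesis using sum_sq(2) by simp
  qed
  show "integrable M (\<lambda>w. (norm (sample_cov Y n w - Sig))\<^sup>2)" unfolding eq
    by (intro Bochner_Integration.integrable_sum ient)
  assume n: "n \<ge> 1"
  have "(\<integral>w. (norm (sample_cov Y n w - Sig))\<^sup>2 \<partial>M)
      = (\<Sum>j\<in>UNIV. \<Sum>k\<in>UNIV. (\<integral>w. (sample_cov Y n w $ j $ k - Sig $ j $ k)\<^sup>2 \<partial>M))"
    unfolding eq by (simp add: Bochner_Integration.integral_sum Bochner_Integration.integrable_sum ient)
  also have "\<dots> = (\<Sum>j\<in>UNIV. \<Sum>k\<in>UNIV. (\<integral>w. (Xc j k 0 w)\<^sup>2 \<partial>M) / real n)"
  proof (intro sum.cong refl)
    fix j k
    have "(\<lambda>w. (sample_cov Y n w $ j $ k - Sig $ j $ k)\<^sup>2) = (\<lambda>w. (1 / real n)\<^sup>2 * (\<Sum>i<n. Xc j k i w)\<^sup>2)"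
      using entry_dev[OF n] by (simp add: power_divide)
    then have "(\<integral>w. (sample_cov Y n w $ j $ k - Sig $ j $ k)\<^sup>2 \<partial>M) = (1 / real n)\<^sup>2 * (real n * (\<integral>w. (Xc j k 0 w)\<^sup>2 \<partial>M))"
      using sum_sq(1) by simp
    also have "\<dots> = (\<integral>w. (Xc j k 0 w)\<^sup>2 \<partial>M) / real n" using n by (simp add: power2_eq_square field_simps)
    finally show "(\<integral>w. (sample_cov Y n w $ j $ k - Sig $ j $ k)\<^sup>2 \<partial>M) = (\<integral>w. (Xc j k 0 w)\<^sup>2 \<partial>M) / real n" .
  qed
  also have "\<dots> = Vc / real n" unfolding Vc_def by (simp add: sum_divide_distrib)
  finally show "(\<integral>w. (norm (sample_cov Y n w - Sig))\<^sup>2 \<partial>M) = Vc / real n" .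
qed

end




lemma Plam:
  assumes M: "prob_space M" and lm: "\<And>n. lam n \<in> borel_measurable M"
    and ae: "AE w in M. (\<lambda>n. lam n w) \<longlonglongrightarrow> 0" and d: "0 < (d::real)"
  shows "(\<lambda>n. measure M {w \<in> space M. d < lam n w}) \<longlonglongrightarrow> 0"
proof -
  define A where "A n = {w \<in> space M. d < lam n w}" for n
  have As: "A n \<in> sets M" for n unfolding A_def using lm by measurable
  have "(\<lambda>n. \<integral>w. (indicator (A n) w :: real) \<partial>M) \<longlonglongrightarrow> (\<integral>w. (0::real) \<partial>M)"
  proof (rule integral_dominated_convergence[where w="\<lambda>_. 1" and s="\<lambda>n. indicator (A n)" and f="\<lambda>_. 0"])
    show "(\<lambda>w. 0::real) \<in> borel_measurable M" by simp
    show "(\<lambda>w. indicator (A n) w :: real) \<in> borel_measurable M" for n using As by simp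
    show "integrable M (\<lambda>w. 1::real)" using M by (simp add: prob_space_def finite_measure.integrable_const)
    show "AE w in M. (\<lambda>n. indicator (A n) w :: real) \<longlonglongrightarrow> 0"
      using ae
    proof (rule AE_mp[OF _ AE_I2], intro impI)
      fix w assume "(\<lambda>n. lam n w) \<longlonglongrightarrow> 0"
      then have "\<forall>\<^sub>F n in sequentially. lam n w < d" using d by (rule order_tendstoD)
      then have "\<forall>\<^sub>F n in sequentially. (indicator (A n) w :: real) = 0"
        by eventually_elim (auto simp: A_def indicator_def)
      then show "(\<lambda>n. indicator (A n) w :: real) \<longlonglongrightarrow> 0" by (rule tendsto_eventually)
    qed
    show "AE w in M. norm (indicator (A n) w :: real) \<le> 1" for n by (simp add: indicator_def)
  qed
  moreover have "(\<integral>w. (indicator (A n) w :: real) \<partial>M) = measure M (A n)" for n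
    using As by (simp add: Bochner_Integration.integral_indicator Int_absorb2 sets.sets_into_space)
  ultimately show ?thesis unfolding A_def by simp
qed

theorem proposition2:
  fixes M :: "'a measure"
    and Sig T :: "real ^ 'p ^ 'p"
    and Y :: "nat \<Rightarrow> 'a \<Rightarrow> real ^ 'p"
    and lam :: "nat \<Rightarrow> 'a \<Rightarrow> real"
  assumes "prob_space M"
    and "pos_def Sig"
    and "prob_space.indep_vars M (\<lambda>_. borel) Y UNIV"
    and "\<And>i. distributed M lborel (Y i) (\<lambda>x. ennreal (mvn_density Sig x))"
    and "\<And>n. lam n \<in> borel_measurable M"
    and "\<And>n \<omega>. \<omega> \<in> space M \<Longrightarrow> 0 \<le> lam n \<omega>"
    and "AE \<omega> in M. (\<lambda>n. lam n \<omega>) \<longlonglongrightarrow> 0"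
    and "pos_def T"
  shows "((\<forall>\<^sub>F n in sequentially. integrable M
            (\<lambda>\<omega>. (frob_norm (sigma_hat_Ia (sample_cov Y n \<omega>) T (lam n \<omega>) - Sig))\<^sup>2))
       \<and> (\<lambda>n. integral\<^sup>L M
            (\<lambda>\<omega>. (frob_norm (sigma_hat_Ia (sample_cov Y n \<omega>) T (lam n \<omega>) - Sig))\<^sup>2))
         \<longlonglongrightarrow> 0)
       \<and> conv_in_prob M (\<lambda>n \<omega>. matrix_inv (sigma_hat_Ia (sample_cov Y n \<omega>) T (lam n \<omega>)))
           (matrix_inv Sig)"
proof -
  have M: "prob_space M" using assms(1) .
  interpret G: gauss_setup M Sig Y unfolding gauss_setup_def using assms(1-4) by blast
  have fmM: "finite_measure M" using M by (simp add: prob_space_def)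
  have sT: "symmetric_mat T" using assms(8) pos_def_def by auto
  define X where "X n w = sigma_hat_Ia (sample_cov Y n w) T (lam n w)" for n w
  define f where "f n w = (norm (X n w - Sig))\<^sup>2" for n w
  define u where "u n w = (norm (sample_cov Y n w - Sig))\<^sup>2" for n w
  have Sm: "(\<lambda>w. sample_cov Y n w) \<in> borel_measurable M" for n by (rule sample_cov_meas[OF G.Ym])
  have symS: "symmetric_mat (sample_cov Y n w)" for n w
    using sample_cov_psd[of Y n w] pos_semidef_def by auto
  have Xm: "X n \<in> borel_measurable M" for n
    unfolding X_def[abs_def] by (rule sh_meas[OF Sm assms(5) symS assms(6) sT])
  have fm: "f n \<in> borel_measurable M" for n unfolding f_def[abs_def] using Xm by measurable
  obtain K where K: "\<forall>S lam. pos_semidef S \<longrightarrow> 0 \<le> lam \<longrightarrow> norm (sigma_hat_Ia S T lam) \<le> K * (1 + norm S)"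
    using sh_bound[OF assms(8)] by blast
  have K0: "0 \<le> K"
  proof -
    have "pos_semidef (0::real^'p^'p)" unfolding pos_semidef_def symmetric_mat_def by (simp add: transpose_def vec_eq_iff)
    then have "norm (sigma_hat_Ia 0 T 0) \<le> K * (1 + norm (0::real^'p^'p))" using K by blast
    then have "norm (sigma_hat_Ia 0 T 0) \<le> K" by simp
    then show ?thesis by (meson norm_ge_zero order_trans)
  qed
  obtain Kc0 where Kc0: "\<forall>S lam. symmetric_mat S \<longrightarrow> 0 \<le> lam \<longrightarrow> lam \<le> 1 \<longrightarrow> norm (S - Sig) \<le> 1 \<longrightarrow>
            norm (sigma_hat_Ia S T lam - Sig) \<le> Kc0 * (norm (S - Sig) + lam)"
    using sh_cont[OF assms(2) assms(8)] by blast
  define Kc where "Kc = max Kc0 0"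
  have Kc: "0 \<le> Kc" unfolding Kc_def by simp
  define s where "s = norm Sig"
  define A0 where "A0 = K * (1 + s) + s"
  define C1 where "C1 = 2 * A0\<^sup>2 + 2 * K\<^sup>2"
  have C1: "0 \<le> C1" unfolding C1_def by simp
  have bnd: "f n w \<le> C1 * (1 + u n w)" if w: "w \<in> space M" for n w
  proof -
    define r where "r = norm (sample_cov Y n w - Sig)"
    have "norm (sample_cov Y n w) \<le> s + r" unfolding s_def r_def
      using norm_triangle_ineq[of Sig "sample_cov Y n w - Sig"] by simp
    moreover have "norm (X n w) \<le> K * (1 + norm (sample_cov Y n w))"
      unfolding X_def using K sample_cov_psd[of Y n w] assms(6)[OF w] by simp
    ultimately have "norm (X n w) \<le> K * (1 + s + r)" using K0
      by (smt (verit) mult_left_mono)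
    then have "norm (X n w - Sig) \<le> A0 + K * r" unfolding A0_def s_def
      using norm_triangle_ineq4[of "X n w" Sig] by (simp add: algebra_simps)
    moreover have "0 \<le> norm (X n w - Sig)" by simp
    ultimately have "f n w \<le> (A0 + K * r)\<^sup>2" unfolding f_def by (simp add: power_mono)
    also have "\<dots> \<le> 2 * A0\<^sup>2 + 2 * K\<^sup>2 * r\<^sup>2"
    proof -
      have "0 \<le> (A0 - K * r)\<^sup>2" by simp
      then show ?thesis by (simp add: power2_eq_square algebra_simps)
    qed
    also have "\<dots> \<le> C1 * (1 + r\<^sup>2)" unfolding C1_def
      by (simp add: algebra_simps mult_right_mono)
    finally show ?thesis unfolding u_def r_def .
  qed
  have iu: "integrable M (u n)" for n unfolding u_def[abs_def] by (rule G.wlln(1))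
  have if_: "integrable M (f n)" for n
  proof (rule Bochner_Integration.integrable_bound[of _ "\<lambda>w. C1 * (1 + u n w)"])
    show "integrable M (\<lambda>w. C1 * (1 + u n w))"
      by (intro integrable_mult_right Bochner_Integration.integrable_add iu finite_measure.integrable_const[OF fmM])
    show "f n \<in> borel_measurable M" by (rule fm)
    show "AE w in M. norm (f n w) \<le> norm (C1 * (1 + u n w))"
    proof (rule AE_I2)
      fix w assume "w \<in> space M"
      moreover have "0 \<le> f n w" "0 \<le> u n w" unfolding f_def u_def by simp_all
      ultimately show "norm (f n w) \<le> norm (C1 * (1 + u n w))" using bnd C1 by simp
    qed
  qed
  have Eu: "(\<lambda>n. \<integral>w. u n w \<partial>M) \<longlonglongrightarrow> 0"
  proof -
    have "\<forall>\<^sub>F n in sequentially. G.Vc / real n = (\<integral>w. u n w \<partial>M)"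
      unfolding u_def eventually_sequentially using G.wlln(2) by (intro exI[of _ 1] allI impI) simp
    then have "((\<lambda>n. G.Vc / real n) \<longlongrightarrow> 0) sequentially = ((\<lambda>n. \<integral>w. u n w \<partial>M) \<longlongrightarrow> 0) sequentially"
      by (rule tendsto_cong)
    then show ?thesis using lim_const_over_n[of G.Vc] by simp
  qed
  define A where "A n d = {w \<in> space M. d < lam n w}" for n d
  have As: "A n d \<in> sets M" for n d unfolding A_def using assms(5) by measurable
  have good: "f n w \<le> (2 * Kc * d)\<^sup>2 + C1 * indicator (A n d) w + C1 * (1 + 1 / d\<^sup>2) * u n w"
    if w: "w \<in> space M" and d: "0 < d" "d \<le> 1" for n w d
  proof -
    have u0: "0 \<le> u n w" unfolding u_def by simp
    have ind0: "0 \<le> (indicator (A n d) w :: real)" by simp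
    have l0: "0 \<le> lam n w" using assms(6)[OF w] .
    show ?thesis
    proof (cases "norm (sample_cov Y n w - Sig) \<le> d \<and> lam n w \<le> d")
      case True
      have "norm (X n w - Sig) \<le> Kc0 * (norm (sample_cov Y n w - Sig) + lam n w)"
        unfolding X_def using Kc0 symS l0 True d by auto
      also have "\<dots> \<le> Kc * (norm (sample_cov Y n w - Sig) + lam n w)"
        unfolding Kc_def using l0 by (intro mult_right_mono) auto
      also have "\<dots> \<le> Kc * (2 * d)" using True Kc by (intro mult_left_mono) auto
      finally have "norm (X n w - Sig) \<le> 2 * Kc * d" by simp
      then have "f n w \<le> (2 * Kc * d)\<^sup>2" unfolding f_def by (simp add: power_mono)
      moreover have "0 \<le> C1 * indicator (A n d) w + C1 * (1 + 1 / d\<^sup>2) * u n w"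
        using C1 u0 ind0 by (simp add: add_nonneg_nonneg)
      ultimately show ?thesis by linarith
    next
      case False
      then consider "d < lam n w" | "d < norm (sample_cov Y n w - Sig)" by linarith
      then show ?thesis
      proof cases
        case 1
        then have "indicator (A n d) w = (1::real)" unfolding A_def using w by simp
        moreover have "C1 * u n w \<le> C1 * (1 + 1 / d\<^sup>2) * u n w"
        proof -
          have "C1 * 1 \<le> C1 * (1 + 1 / d\<^sup>2)" using C1 by (intro mult_left_mono) auto
          then show ?thesis using u0 by (intro mult_right_mono) auto
        qed
        ultimately have h: "C1 * (1 + u n w) = C1 * indicator (A n d) w + C1 * u n w"
          "C1 * u n w \<le> C1 * (1 + 1 / d\<^sup>2) * u n w" by (simp_all add: algebra_simps)
        have "0 \<le> (2 * Kc * d)\<^sup>2" by simp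
        then show ?thesis using bnd[OF w, of n] h by linarith
      next
        case 2
        then have "d\<^sup>2 < u n w" unfolding u_def using d by (simp add: power_strict_mono)
        then have "1 \<le> u n w / d\<^sup>2" using d by simp
        then have "C1 * 1 \<le> C1 * (u n w / d\<^sup>2)" using C1 by (intro mult_left_mono) auto
        then have "C1 * (1 + u n w) \<le> C1 * (1 + 1 / d\<^sup>2) * u n w" by (simp add: algebra_simps)
        then show ?thesis using bnd[OF w, of n] C1 ind0 by (smt (verit) mult_nonneg_nonneg zero_le_power2)
      qed
    qed
  qed
  have intb: "(\<integral>w. f n w \<partial>M) \<le> (2 * Kc * d)\<^sup>2 + C1 * measure M (A n d) + C1 * (1 + 1 / d\<^sup>2) * (\<integral>w. u n w \<partial>M)"
    if d: "0 < d" "d \<le> 1" for n d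
  proof -
    have iind: "integrable M (\<lambda>w. indicator (A n d) w :: real)"
      using As by (intro integrable_real_indicator) (auto simp: finite_measure.emeasure_finite[OF fmM] less_top[symmetric])
    have iR: "integrable M (\<lambda>w. (2 * Kc * d)\<^sup>2 + C1 * indicator (A n d) w + C1 * (1 + 1 / d\<^sup>2) * u n w)"
      by (intro Bochner_Integration.integrable_add integrable_mult_right iind iu finite_measure.integrable_const[OF fmM])
    have "(\<integral>w. f n w \<partial>M) \<le> (\<integral>w. (2 * Kc * d)\<^sup>2 + C1 * indicator (A n d) w + C1 * (1 + 1 / d\<^sup>2) * u n w \<partial>M)"
      by (rule integral_mono_AE[OF if_ iR]) (use good d in auto)
    also have "\<dots> = (\<integral>w. (2 * Kc * d)\<^sup>2 + C1 * indicator (A n d) w \<partial>M) + (\<integral>w. C1 * (1 + 1 / d\<^sup>2) * u n w \<partial>M)"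
      by (intro Bochner_Integration.integral_add Bochner_Integration.integrable_add integrable_mult_right iind iu
          finite_measure.integrable_const[OF fmM])
    also have "(\<integral>w. (2 * Kc * d)\<^sup>2 + C1 * indicator (A n d) w \<partial>M) = (\<integral>w. (2 * Kc * d)\<^sup>2 \<partial>M) + (\<integral>w. C1 * indicator (A n d) w \<partial>M)"
      by (intro Bochner_Integration.integral_add integrable_mult_right iind finite_measure.integrable_const[OF fmM])
    also have "(\<integral>w. (2 * Kc * d)\<^sup>2 \<partial>M) = (2 * Kc * d)\<^sup>2" using prob_space.prob_space[OF M] by simp
    also have "(\<integral>w. C1 * indicator (A n d) w \<partial>M) = C1 * measure M (A n d)"
      using As by (simp add: Bochner_Integration.integral_indicator Int_absorb2 sets.sets_into_space)
    also have "(\<integral>w. C1 * (1 + 1 / d\<^sup>2) * u n w \<partial>M) = C1 * (1 + 1 / d\<^sup>2) * (\<integral>w. u n w \<partial>M)" by simp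
    finally show ?thesis .
  qed
  have fnn: "0 \<le> (\<integral>w. f n w \<partial>M)" for n unfolding f_def by simp
  have Ef: "(\<lambda>n. \<integral>w. f n w \<partial>M) \<longlonglongrightarrow> 0"
  proof (rule order_tendstoI)
    fix a :: real assume "a < 0"
    then have "a < (\<integral>w. f n w \<partial>M)" for n using fnn[of n] by linarith
    then show "\<forall>\<^sub>F n in sequentially. a < (\<integral>w. f n w \<partial>M)" by simp
  next
    fix a :: real assume a: "0 < a"
    define d where "d = min 1 (sqrt a / (4 * (Kc + 1)))"
    have d: "0 < d" "d \<le> 1" unfolding d_def using a Kc by auto
    have "2 * Kc * d \<le> 2 * Kc * (sqrt a / (4 * (Kc + 1)))" unfolding d_def using Kc by (intro mult_left_mono) auto
    also have "\<dots> \<le> sqrt a / 2"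
    proof -
      have "Kc / (Kc + 1) \<le> 1" using Kc by simp
      then have "Kc / (Kc + 1) * (sqrt a / 2) \<le> 1 * (sqrt a / 2)" using a by (intro mult_right_mono) auto
      then show ?thesis using Kc by (simp add: field_simps)
    qed
    finally have "(2 * Kc * d)\<^sup>2 \<le> (sqrt a / 2)\<^sup>2" using Kc d by (intro power_mono) auto
    also have "\<dots> = a / 4" using a by (simp add: power_divide)
    finally have t1: "(2 * Kc * d)\<^sup>2 \<le> a / 4" .
    have "(\<lambda>n. C1 * measure M (A n d) + C1 * (1 + 1 / d\<^sup>2) * (\<integral>w. u n w \<partial>M)) \<longlonglongrightarrow> C1 * 0 + C1 * (1 + 1 / d\<^sup>2) * 0"
      by (intro tendsto_intros Eu) (unfold A_def, rule Plam[OF M assms(5) assms(7) d(1)])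
    then have "\<forall>\<^sub>F n in sequentially. C1 * measure M (A n d) + C1 * (1 + 1 / d\<^sup>2) * (\<integral>w. u n w \<partial>M) < a / 2"
      using a by (intro order_tendstoD) auto
    then show "\<forall>\<^sub>F n in sequentially. (\<integral>w. f n w \<partial>M) < a"
    proof eventually_elim
      case (elim n)
      then show ?case using intb[OF d, of n] t1 a by linarith
    qed
  qed
  have part1: "(\<forall>\<^sub>F n in sequentially. integrable M (\<lambda>w. (frob_norm (sigma_hat_Ia (sample_cov Y n w) T (lam n w) - Sig))\<^sup>2))
       \<and> (\<lambda>n. integral\<^sup>L M (\<lambda>w. (frob_norm (sigma_hat_Ia (sample_cov Y n w) T (lam n w) - Sig))\<^sup>2)) \<longlonglongrightarrow> 0"
    using if_ Ef unfolding f_def X_def frob_norm_eq by simp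
  have part2: "conv_in_prob M (\<lambda>n w. matrix_inv (sigma_hat_Ia (sample_cov Y n w) T (lam n w))) (matrix_inv Sig)"
    unfolding conv_in_prob_def
  proof (intro conjI allI impI)
    fix n
    show "(\<lambda>w. matrix_inv (sigma_hat_Ia (sample_cov Y n w) T (lam n w))) \<in> borel_measurable M"
      using measurable_compose[OF Xm matrix_inv_measurable] unfolding X_def by simp
  next
    fix e :: real assume e: "e > 0"
    have "det Sig \<noteq> 0" using pos_def_invertible[OF assms(2)] invertible_det_nz by blast
    then have "isCont matrix_inv Sig" by (rule matrix_inv_isCont)
    then obtain eta where eta: "eta > 0" "\<And>Z. dist Z Sig < eta \<Longrightarrow> dist (matrix_inv Z) (matrix_inv Sig) < e"
      unfolding continuous_at_eps_delta using e by blast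
    define B where "B n = {w \<in> space M. e < frob_norm (matrix_inv (X n w) - matrix_inv Sig)}" for n
    define B' where "B' n = {w \<in> space M. eta\<^sup>2 \<le> f n w}" for n
    have B'm: "B' n \<in> sets M" for n unfolding B'_def using fm by measurable
    have sub: "B n \<subseteq> B' n" for n
    proof
      fix w assume "w \<in> B n"
      then have w: "w \<in> space M" and "e < dist (matrix_inv (X n w)) (matrix_inv Sig)"
        unfolding B_def frob_norm_eq dist_norm by auto
      then have "\<not> dist (X n w) Sig < eta" using eta(2) by fastforce
      then have "eta \<le> norm (X n w - Sig)" by (simp add: dist_norm)
      then have "eta\<^sup>2 \<le> f n w" unfolding f_def using eta by (simp add: power_mono)
      then show "w \<in> B' n" unfolding B'_def using w by simp
    qed
    have le: "measure M (B n) \<le> (\<integral>w. f n w \<partial>M) / eta\<^sup>2" for n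
    proof -
      have "measure M (B n) \<le> measure M (B' n)"
        by (rule finite_measure.finite_measure_mono[OF fmM sub B'm])
      also have "\<dots> \<le> (\<integral>w. f n w \<partial>M) / eta\<^sup>2" unfolding B'_def
        by (rule integral_Markov_inequality_measure[OF if_ sets.top]) (use eta in \<open>auto simp: f_def\<close>)
      finally show ?thesis .
    qed
    have "(\<lambda>n. measure M (B n)) \<longlonglongrightarrow> 0"
    proof (rule tendsto_sandwich[of "\<lambda>_. 0" _ _ "\<lambda>n. (\<integral>w. f n w \<partial>M) / eta\<^sup>2"])
      show "\<forall>\<^sub>F n in sequentially. 0 \<le> measure M (B n)" by simp
      show "\<forall>\<^sub>F n in sequentially. measure M (B n) \<le> (\<integral>w. f n w \<partial>M) / eta\<^sup>2" using le by simp
      show "((\<lambda>n. 0) \<longlongrightarrow> (0::real)) sequentially" by simp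
      show "(\<lambda>n. (\<integral>w. f n w \<partial>M) / eta\<^sup>2) \<longlonglongrightarrow> 0" using tendsto_divide[OF Ef tendsto_const, of "eta\<^sup>2"] eta by simp
    qed
    then show "(\<lambda>n. measure M {w \<in> space M. e < frob_norm (matrix_inv (sigma_hat_Ia (sample_cov Y n w) T (lam n w)) - matrix_inv Sig)}) \<longlonglongrightarrow> 0"
      unfolding B_def X_def .
  qed
  show ?thesis using part1 part2 by blast
qed


end
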